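(* Let $\mathcal{H}=\mathbb{C}^2$ and let $\mathcal{L}=(\tilde H,\Gamma)$ be a minimally degenerate dephasing Lindbladian on $\mathcal{B}(\mathcal{H})$. Then there exist a non-degenerate, traceless self-adjoint operator $H$ on $\mathbb{C}^2$ and a real number $\gamma\geq 0$ such that $$\mathcal{L}=\mathcal{L}_0+\frac{\gamma}{2}\mathcal{D},\qquad \mathcal{L}_0\rho=-i[H,\rho],\qquad \mathcal{D}\rho=-[\sqrt{H},[\sqrt{H},\rho]],$$ where $\sqrt{H}:=\operatorname{sgn}(H)\sqrt{|H|}$ (functional calculus). Moreover, if $\mathcal{L}=\mathcal{L}_s$ depends smoothly on a real parameter $s$ (i.e. $\tilde H_s$ and the $\Gamma_{\alpha,s}$ are smooth in $s$), then $H_s$ and $\gamma_s$ in this representation depend smoothly on $s$ as well.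
   Context: For a finite-dimensional Hilbert space $\mathcal{H}$, a Lindbladian $\mathcal{L}=(\tilde H,\Gamma)$ is the super-operator on $\mathcal{B}(\mathcal{H})$ given by $\mathcal{L}\rho=-i[\tilde H,\rho]+\sum_{\alpha\in I}\big(\Gamma_\alpha\rho\Gamma_\alpha^*-\tfrac12(\Gamma_\alpha^*\Gamma_\alpha\rho+\rho\Gamma_\alpha^*\Gamma_\alpha)\big)$, where $\tilde H=\tilde H^*$, $I$ is a finite index set and $\Gamma_\alpha$ are operators on $\mathcal{H}$. It is called dephasing if $\Gamma_\alpha=f_\alpha(\tilde H)$ for bounded Borel functions $f_\alpha$. A dephasing Lindbladian on an $n$-dimensional space has a kernel of dimension at least $n$; it is called minimally degenerate if each of its eigenvalues is minimally degenerate, i.e. the kernel has dimension exactly $n$ and every nonzero eigenvalue of $\mathcal{L}$ is simple. *)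

theory Defs
  imports Jordan_Normal_Form.Jordan_Normal_Form Jordan_Normal_Form.Schur_Decomposition Jordan_Normal_Form.Matrix_Kernel
begin

definition hermitian_op :: "nat \<Rightarrow> complex mat \<Rightarrow> bool" where
  "hermitian_op n A \<longleftrightarrow> A \<in> carrier_mat n n \<and> mat_adjoint A = A"

definition unitary_op :: "nat \<Rightarrow> complex mat \<Rightarrow> bool" where
  "unitary_op n U \<longleftrightarrow> U \<in> carrier_mat n n \<and> mat_adjoint U * U = 1\<^sub>m n \<and> U * mat_adjoint U = 1\<^sub>m n"

definition diag_op :: "nat \<Rightarrow> (nat \<Rightarrow> complex) \<Rightarrow> complex mat" where
  "diag_op n d = mat n n (\<lambda>(i,j). if i = j then d i else 0)"

definition op_trace :: "nat \<Rightarrow> complex mat \<Rightarrow> complex" where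
  "op_trace n A = (\<Sum>i<n. A $$ (i,i))"

text \<open>Functional calculus f(A) of a self-adjoint operator A for f : R -> C:
  diagonalise A = U diag(d) U^* with U unitary and d real; then f(A) = U diag(f o d) U^*.
  (This is independent of the chosen diagonalisation.)\<close>

definition matfun :: "nat \<Rightarrow> (real \<Rightarrow> complex) \<Rightarrow> complex mat \<Rightarrow> complex mat" where
  "matfun n f A = (THE B. \<exists>U d. unitary_op n U \<and>
      A = U * diag_op n (\<lambda>i. complex_of_real (d i)) * mat_adjoint U \<and>
      B = U * diag_op n (\<lambda>i. f (d i)) * mat_adjoint U)"

definition signed_sqrt_op :: "nat \<Rightarrow> complex mat \<Rightarrow> complex mat" where
  "signed_sqrt_op n H = matfun n (\<lambda>x. complex_of_real (sgn x * sqrt \<bar>x\<bar>)) H"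

definition nondegenerate_op :: "nat \<Rightarrow> complex mat \<Rightarrow> bool" where
  "nondegenerate_op n A \<longleftrightarrow> A \<in> carrier_mat n n \<and>
     (\<forall>\<mu>. eigenvalue A \<mu> \<longrightarrow> Polynomial.order \<mu> (char_poly A) = 1)"

definition commutator :: "complex mat \<Rightarrow> complex mat \<Rightarrow> complex mat" where
  "commutator A B = A * B - B * A"

definition mat_sum :: "nat \<Rightarrow> ('i \<Rightarrow> complex mat) \<Rightarrow> 'i set \<Rightarrow> complex mat" where
  "mat_sum n F I = mat n n (\<lambda>ij. \<Sum>\<alpha>\<in>I. F \<alpha> $$ ij)"

definition lindbladian :: "nat \<Rightarrow> complex mat \<Rightarrow> 'i set \<Rightarrow> ('i \<Rightarrow> complex mat) \<Rightarrow> complex mat \<Rightarrow> complex mat" where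
  "lindbladian n Ht I \<Gamma> \<rho> =
     (- \<i>) \<cdot>\<^sub>m commutator Ht \<rho> +
     mat_sum n (\<lambda>\<alpha>. \<Gamma> \<alpha> * \<rho> * mat_adjoint (\<Gamma> \<alpha>)
        - (1/2) \<cdot>\<^sub>m (mat_adjoint (\<Gamma> \<alpha>) * \<Gamma> \<alpha> * \<rho> + \<rho> * mat_adjoint (\<Gamma> \<alpha>) * \<Gamma> \<alpha>)) I"

definition dephasing :: "nat \<Rightarrow> complex mat \<Rightarrow> 'i set \<Rightarrow> ('i \<Rightarrow> complex mat) \<Rightarrow> bool" where
  "dephasing n Ht I \<Gamma> \<longleftrightarrow> hermitian_op n Ht \<and> finite I \<and>
     (\<forall>\<alpha>\<in>I. \<exists>f. \<Gamma> \<alpha> = matfun n f Ht)"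

text \<open>Matrix of a super-operator on B(C^n) w.r.t. the matrix-unit basis E_(i,j),
  vectorised index k = n*i + j.\<close>

definition mat_unit :: "nat \<Rightarrow> nat \<Rightarrow> nat \<Rightarrow> complex mat" where
  "mat_unit n a b = mat n n (\<lambda>(i,j). if i = a \<and> j = b then 1 else 0)"

definition superop_mat :: "nat \<Rightarrow> (complex mat \<Rightarrow> complex mat) \<Rightarrow> complex mat" where
  "superop_mat n L = mat (n*n) (n*n)
     (\<lambda>(k,l). L (mat_unit n (l div n) (l mod n)) $$ (k div n, k mod n))"

definition minimally_degenerate :: "nat \<Rightarrow> (complex mat \<Rightarrow> complex mat) \<Rightarrow> bool" where
  "minimally_degenerate n L \<longleftrightarrow>
     kernel_dim (superop_mat n L) = n \<and>
     (\<forall>\<mu>. eigenvalue (superop_mat n L) \<mu> \<and> \<mu> \<noteq> 0 \<longrightarrow> Polynomial.order \<mu> (char_poly (superop_mat n L)) = 1)"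

definition smooth_fun :: "(real \<Rightarrow> 'a::real_normed_vector) \<Rightarrow> bool" where
  "smooth_fun f \<longleftrightarrow> (\<exists>D :: nat \<Rightarrow> real \<Rightarrow> 'a. D 0 = f \<and>
      (\<forall>k t. (D k has_vector_derivative D (Suc k) t) (at t)))"

definition smooth_op_family :: "nat \<Rightarrow> (real \<Rightarrow> complex mat) \<Rightarrow> bool" where
  "smooth_op_family n A \<longleftrightarrow> (\<forall>s. A s \<in> carrier_mat n n) \<and>
     (\<forall>i<n. \<forall>j<n. smooth_fun (\<lambda>s. A s $$ (i,j)))"

end

theory Submission
  imports Defs
begin


lemma smooth_coind:
  fixes C :: "(real \<Rightarrow> 'a::real_normed_vector) set"
  assumes step: "\<And>f. f \<in> C \<Longrightarrow> \<exists>f'\<in>C. \<forall>t. (f has_vector_derivative f' t) (at t)"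
    and f: "f \<in> C"
  shows "smooth_fun f"
proof -
  obtain der where der: "\<And>f. f \<in> C \<Longrightarrow> der f \<in> C \<and> (\<forall>t. (f has_vector_derivative der f t) (at t))"
    using step by metis
  define D where "D k = (der ^^ k) f" for k
  have DC: "D k \<in> C" for k by (induction k) (auto simp: D_def f der)
  show ?thesis unfolding smooth_fun_def
    by (rule exI[of _ D]) (auto simp: D_def der DC[unfolded D_def])
qed

lemma smooth_D:
  assumes "smooth_fun f"
  shows "\<exists>f'. (\<forall>t. (f has_vector_derivative f' t) (at t)) \<and> smooth_fun f'"
proof -
  from assms obtain D where D: "D 0 = f" "\<And>k t. (D k has_vector_derivative D (Suc k) t) (at t)"
    unfolding smooth_fun_def by blast
  show ?thesis
    by (rule exI[of _ "D 1"], insert D, auto simp: smooth_fun_def intro!: exI[of _ "\<lambda>k. D (Suc k)"])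
qed

lemma smooth_const: "smooth_fun (\<lambda>t. c)"
  by (rule smooth_coind[of "{\<lambda>t. c, \<lambda>t. 0}"]) auto

lemma smooth_add:
  assumes "smooth_fun f" "smooth_fun g" shows "smooth_fun (\<lambda>t. f t + g t)"
proof (rule smooth_coind[of "{h. \<exists>f g. smooth_fun f \<and> smooth_fun g \<and> h = (\<lambda>t. f t + g t)}"])
  fix h assume "h \<in> {h. \<exists>f g. smooth_fun f \<and> smooth_fun g \<and> h = (\<lambda>t. f t + g t)}"
  then obtain f g where fg: "smooth_fun f" "smooth_fun g" "h = (\<lambda>t. f t + g t)" by blast
  obtain f' g' where "\<forall>t. (f has_vector_derivative f' t) (at t)" "smooth_fun f'"
    "\<forall>t. (g has_vector_derivative g' t) (at t)" "smooth_fun g'"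
    using smooth_D fg by metis
  then show "\<exists>f'\<in>{h. \<exists>f g. smooth_fun f \<and> smooth_fun g \<and> h = (\<lambda>t. f t + g t)}. \<forall>t. (h has_vector_derivative f' t) (at t)"
    using fg by (intro bexI[of _ "\<lambda>t. f' t + g' t"]) (auto intro!: has_vector_derivative_add)
qed (use assms in auto)

lemma smooth_linear:
  assumes "bounded_linear L" "smooth_fun f" shows "smooth_fun (\<lambda>t. L (f t))"
proof (rule smooth_coind[of "{h. \<exists>f. smooth_fun f \<and> h = (\<lambda>t. L (f t))}"])
  fix h assume "h \<in> {h. \<exists>f. smooth_fun f \<and> h = (\<lambda>t. L (f t))}"
  then obtain f where f: "smooth_fun f" "h = (\<lambda>t. L (f t))" by blast
  obtain f' where "\<forall>t. (f has_vector_derivative f' t) (at t)" "smooth_fun f'"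
    using smooth_D f by metis
  then show "\<exists>f'\<in>{h. \<exists>f. smooth_fun f \<and> h = (\<lambda>t. L (f t))}. \<forall>t. (h has_vector_derivative f' t) (at t)"
    using f by (auto intro!: exI[of _ f'] bounded_linear.has_vector_derivative[OF assms(1)])
qed (use assms in auto)

lemma smooth_uminus: "smooth_fun f \<Longrightarrow> smooth_fun (\<lambda>t. - f t)"
  using smooth_linear[OF bounded_linear_minus[OF bounded_linear_ident]] by auto

lemma smooth_diff: "smooth_fun f \<Longrightarrow> smooth_fun g \<Longrightarrow> smooth_fun (\<lambda>t. f t - g t)"
  using smooth_add[OF _ smooth_uminus, of f g] by simp

lemma smooth_sum_nat:
  fixes n :: nat shows "(\<And>i. i < n \<Longrightarrow> smooth_fun (F i)) \<Longrightarrow> smooth_fun (\<lambda>t. \<Sum>i<n. F i t)"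
  by (induction n) (auto simp: smooth_const intro!: smooth_add)

lemma smooth_sum:
  "finite I \<Longrightarrow> (\<And>i. i \<in> I \<Longrightarrow> smooth_fun (F i)) \<Longrightarrow> smooth_fun (\<lambda>t. \<Sum>i\<in>I. F i t)"
  by (induction I rule: finite_induct) (auto simp: smooth_const intro!: smooth_add)

definition prodsums :: "(real \<Rightarrow> 'a::real_normed_algebra) set" where
  "prodsums = {h. \<exists>(n::nat) F G. (\<forall>i<n. smooth_fun (F i) \<and> smooth_fun (G i)) \<and> h = (\<lambda>t. \<Sum>i<n. F i t * G i t)}"

lemma sum_split_double: fixes n :: nat shows "(\<Sum>i<n. (a i :: 'a::comm_monoid_add) + b i) = (\<Sum>i<2*n. if i < n then a i else b (i - n))"
proof -
  let ?f = "\<lambda>i. if i < n then a i else b (i - n)"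
  have "(\<Sum>i<2*n. ?f i) = sum ?f {0..<n} + sum ?f {n..<n+n}"
    using sum.atLeastLessThan_concat[of 0 n "n+n" ?f] by (simp add: mult_2 lessThan_atLeast0)
  also have "sum ?f {0..<n} = (\<Sum>i<n. a i)" by (simp add: lessThan_atLeast0)
  also have "sum ?f {n..<n+n} = (\<Sum>i\<in>{n..<n+n}. b (i - n))" by (rule sum.cong) auto
  also have "\<dots> = (\<Sum>i<n. b i)"
    using sum.shift_bounds_nat_ivl[of "\<lambda>i. b (i - n)" 0 n n] by (simp add: lessThan_atLeast0)
  finally show ?thesis by (simp add: sum.distrib)
qed

lemma smooth_mult:
  fixes f g :: "real \<Rightarrow> 'a::real_normed_algebra"
  assumes "smooth_fun f" "smooth_fun g" shows "smooth_fun (\<lambda>t. f t * g t)"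
proof (rule smooth_coind[of prodsums])
  fix h :: "real \<Rightarrow> 'a" assume "h \<in> prodsums"
  then obtain n :: nat and F G where FG: "\<forall>i<n. smooth_fun (F i) \<and> smooth_fun (G i)" "h = (\<lambda>t. \<Sum>i<n. F i t * G i t)"
    unfolding prodsums_def by blast
  have "\<forall>i. \<exists>F' G'. i < n \<longrightarrow> (\<forall>t. (F i has_vector_derivative F' t) (at t)) \<and> smooth_fun F' \<and>
     (\<forall>t. (G i has_vector_derivative G' t) (at t)) \<and> smooth_fun G'"
    using smooth_D FG(1) by metis
  then obtain F' G' where D: "\<And>i. i < n \<Longrightarrow> (\<forall>t. (F i has_vector_derivative F' i t) (at t)) \<and> smooth_fun (F' i) \<and>
     (\<forall>t. (G i has_vector_derivative G' i t) (at t)) \<and> smooth_fun (G' i)"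
    by metis
  define F2 where "F2 i = (if i < n then F i else F' (i - n))" for i
  define G2 where "G2 i = (if i < n then G' i else G (i - n))" for i
  have hd: "(h has_vector_derivative (\<Sum>i<2*n. F2 i t * G2 i t)) (at t)" for t
  proof -
    have "(h has_vector_derivative (\<Sum>i<n. F i t * G' i t + F' i t * G i t)) (at t)"
      unfolding FG(2) by (rule has_vector_derivative_sum, rule has_vector_derivative_mult) (use D in auto)
    moreover have "(\<Sum>i<n. F i t * G' i t + F' i t * G i t) = (\<Sum>i<2*n. F2 i t * G2 i t)"
      unfolding sum_split_double by (rule sum.cong) (auto simp: F2_def G2_def)
    ultimately show ?thesis by simp
  qed
  have mem: "(\<lambda>t. \<Sum>i<2*n. F2 i t * G2 i t) \<in> prodsums"
    unfolding prodsums_def mem_Collect_eq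
    by (rule exI[of _ "2*n"], rule exI[of _ F2], rule exI[of _ G2]) (use D FG(1) in \<open>auto simp: F2_def G2_def\<close>)
  show "\<exists>f'\<in>prodsums. \<forall>t. (h has_vector_derivative f' t) (at t)" using hd by (intro bexI[OF _ mem]) auto
next
  show "(\<lambda>t. f t * g t) \<in> prodsums" unfolding prodsums_def mem_Collect_eq
    by (rule exI[of _ 1], rule exI[of _ "\<lambda>_. f"], rule exI[of _ "\<lambda>_. g"]) (use assms in auto)
qed

definition powsums :: "(real \<Rightarrow> real) \<Rightarrow> (real \<Rightarrow> real) set" where
  "powsums g = {h. \<exists>(n::nat) F a. (\<forall>i<n. smooth_fun (F i)) \<and> h = (\<lambda>t. \<Sum>i<n. F i t * g t powr a i)}"

lemma smooth_powr:
  fixes g :: "real \<Rightarrow> real"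
  assumes g: "smooth_fun g" and pos: "\<And>t. g t > 0" shows "smooth_fun (\<lambda>t. g t powr b)"
proof (rule smooth_coind[of "powsums g"])
  obtain g' where g': "\<forall>t. (g has_vector_derivative g' t) (at t)" "smooth_fun g'" using smooth_D g by metis
  fix h assume "h \<in> powsums g"
  then obtain n :: nat and F a where Fa: "\<forall>i<n. smooth_fun (F i)" "h = (\<lambda>t. \<Sum>i<n. F i t * g t powr a i)"
    unfolding powsums_def by blast
  have "\<forall>i. \<exists>F'. i < n \<longrightarrow> (\<forall>t. (F i has_vector_derivative F' t) (at t)) \<and> smooth_fun F'"
    using smooth_D Fa(1) by metis
  then obtain F' where D: "\<And>i. i < n \<Longrightarrow> (\<forall>t. (F i has_vector_derivative F' i t) (at t)) \<and> smooth_fun (F' i)"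
    by metis
  define F2 where "F2 i = (if i < n then (\<lambda>t. a i * F i t * g' t) else F' (i - n))" for i
  define a2 where "a2 i = (if i < n then a i - 1 else a (i - n))" for i
  have hd: "(h has_vector_derivative (\<Sum>i<2*n. F2 i t * g t powr a2 i)) (at t)" for t
  proof -
    have "(h has_vector_derivative (\<Sum>i<n. F i t * (a i * g t powr (a i - 1) * g' t) + F' i t * g t powr a i)) (at t)"
      unfolding Fa(2)
    proof (rule has_vector_derivative_sum, rule has_vector_derivative_mult)
      fix i assume "i \<in> {..<n}"
      then show "(F i has_vector_derivative F' i t) (at t)" using D by auto
      show "((\<lambda>t. g t powr a i) has_vector_derivative a i * g t powr (a i - 1) * g' t) (at t)"
        using DERIV_fun_powr[of g "g' t" t "a i"] g'(1) pos
        by (simp add: has_real_derivative_iff_has_vector_derivative)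
    qed
    moreover have "(\<Sum>i<n. F i t * (a i * g t powr (a i - 1) * g' t) + F' i t * g t powr a i) = (\<Sum>i<2*n. F2 i t * g t powr a2 i)"
      unfolding sum_split_double by (rule sum.cong) (auto simp: F2_def a2_def)
    ultimately show ?thesis by simp
  qed
  have mem: "(\<lambda>t. \<Sum>i<2*n. F2 i t * g t powr a2 i) \<in> powsums g"
    unfolding powsums_def mem_Collect_eq
    by (rule exI[of _ "2*n"], rule exI[of _ F2], rule exI[of _ a2])
      (use D Fa(1) g'(2) in \<open>auto simp: F2_def intro!: smooth_mult smooth_const\<close>)
  show "\<exists>f'\<in>powsums g. \<forall>t. (h has_vector_derivative f' t) (at t)" using hd by (intro bexI[OF _ mem]) auto
next
  show "(\<lambda>t. g t powr b) \<in> powsums g" unfolding powsums_def mem_Collect_eq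
    by (rule exI[of _ 1], rule exI[of _ "\<lambda>_ _. 1"], rule exI[of _ "\<lambda>_. b"]) (auto simp: smooth_const)
qed



definition M2 :: "complex \<Rightarrow> complex \<Rightarrow> complex \<Rightarrow> complex \<Rightarrow> complex mat" where
  "M2 a b c d = mat 2 2 (\<lambda>(i,j). if i = 0 then (if j = 0 then a else b) else (if j = 0 then c else d))"

lemma less2: "(i::nat) < 2 \<longleftrightarrow> i = 0 \<or> i = 1" by auto

lemma M2_carrier[simp]: "M2 a b c d \<in> carrier_mat 2 2" and M2_dims[simp]: "dim_row (M2 a b c d) = 2" "dim_col (M2 a b c d) = 2"
  by (auto simp: M2_def)

lemma M2_index[simp]: "M2 a b c d $$ (0,0) = a" "M2 a b c d $$ (0,1) = b" "M2 a b c d $$ (1,0) = c" "M2 a b c d $$ (1,1) = d"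
  by (auto simp: M2_def)

lemma M2_eta: "A \<in> carrier_mat 2 2 \<Longrightarrow> A = M2 (A $$ (0,0)) (A $$ (0,1)) (A $$ (1,0)) (A $$ (1,1))"
  by (rule eq_matI) (auto simp: M2_def less2)

lemma M2_eq[simp]: "M2 a b c d = M2 a' b' c' d' \<longleftrightarrow> a = a' \<and> b = b' \<and> c = c' \<and> d = d'"
  by (metis M2_index)

lemma sum2: "(\<Sum>i\<in>{0..<2::nat}. f i) = f 0 + f 1" by (simp add: numeral_2_eq_2)

lemma M2_mult[simp]: "M2 a b c d * M2 a' b' c' d' = M2 (a*a' + b*c') (a*b' + b*d') (c*a' + d*c') (c*b' + d*d')"
  by (rule eq_matI) (auto simp: less2 scalar_prod_def sum2 M2_def)

lemma M2_add[simp]: "M2 a b c d + M2 a' b' c' d' = M2 (a+a') (b+b') (c+c') (d+d')"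
  by (rule eq_matI) (auto simp: less2 M2_def)

lemma M2_minus[simp]: "M2 a b c d - M2 a' b' c' d' = M2 (a-a') (b-b') (c-c') (d-d')"
  by (rule eq_matI) (auto simp: less2 M2_def)

lemma M2_uminus[simp]: "- M2 a b c d = M2 (-a) (-b) (-c) (-d)"
  by (rule eq_matI) (auto simp: less2 M2_def)

lemma M2_smult[simp]: "k \<cdot>\<^sub>m M2 a b c d = M2 (k*a) (k*b) (k*c) (k*d)"
  by (rule eq_matI) (auto simp: less2 M2_def)

lemma M2_adj[simp]: "mat_adjoint (M2 a b c d) = M2 (cnj a) (cnj c) (cnj b) (cnj d)"
  by (rule eq_matI) (auto simp: less2 M2_def mat_adjoint_def mat_of_rows_index cols_def)

lemma M2_one: "1\<^sub>m 2 = M2 1 0 0 1"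
  by (rule eq_matI) (auto simp: less2 M2_def)

lemma M2_zero: "0\<^sub>m 2 2 = M2 0 0 0 0"
  by (rule eq_matI) (auto simp: less2 M2_def)

lemma M2_diag: "diag_op 2 d = M2 (d 0) 0 0 (d 1)"
  by (rule eq_matI) (auto simp: less2 M2_def diag_op_def)

lemma M2_sum: "mat_sum 2 (\<lambda>\<alpha>. M2 (A \<alpha>) (B \<alpha>) (C \<alpha>) (D \<alpha>)) I = M2 (\<Sum>\<alpha>\<in>I. A \<alpha>) (\<Sum>\<alpha>\<in>I. B \<alpha>) (\<Sum>\<alpha>\<in>I. C \<alpha>) (\<Sum>\<alpha>\<in>I. D \<alpha>)"
  by (rule eq_matI) (auto simp: less2 M2_def mat_sum_def)

lemma M2_units: "mat_unit 2 0 0 = M2 1 0 0 0" "mat_unit 2 0 1 = M2 0 1 0 0" "mat_unit 2 1 0 = M2 0 0 1 0" "mat_unit 2 1 1 = M2 0 0 0 1"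
  by (rule eq_matI; auto simp: less2 M2_def mat_unit_def)+

lemma M2_trace[simp]: "op_trace 2 (M2 a b c d) = a + d"
  by (simp add: op_trace_def numeral_2_eq_2 M2_def)

lemma M2_commutator[simp]: "commutator (M2 a b c d) (M2 a' b' c' d') =  M2 (a*a' + b*c' - (a'*a + b'*c)) (a*b' + b*d' - (a'*b + b'*d)) (c*a' + d*c' - (c'*a + d'*c)) (c*b' + d*d' - (c'*b + d'*d))"
  by (simp add: commutator_def)

lemma unitary_M2: "unitary_op 2 (M2 a b c d) \<longleftrightarrow>
  cnj a * a + cnj c * c = 1 \<and> cnj a * b + cnj c * d = 0 \<and> cnj b * a + cnj d * c = 0 \<and> cnj b * b + cnj d * d = 1 \<and>
  a * cnj a + b * cnj b = 1 \<and> a * cnj c + b * cnj d = 0 \<and> c * cnj a + d * cnj b = 0 \<and> c * cnj c + d * cnj d = 1"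
  by (simp add: unitary_op_def M2_one)

lemma hermitian_M2: "hermitian_op 2 (M2 a b c d) \<longleftrightarrow> cnj a = a \<and> cnj c = b \<and> cnj d = d"
  by (auto simp add: hermitian_op_def)



lemma col_eq:
  fixes a b c e d0 d1 :: complex
  assumes "cnj a * a + cnj c * c = 1" "cnj b * a + cnj e * c = 0"
  shows "(a*d0*cnj a + b*d1*cnj b) * a + (a*d0*cnj c + b*d1*cnj e) * c = d0 * a"
        "(c*d0*cnj a + e*d1*cnj b) * a + (c*d0*cnj c + e*d1*cnj e) * c = d0 * c"
proof -
  have "(a*d0*cnj a + b*d1*cnj b) * a + (a*d0*cnj c + b*d1*cnj e) * c = a*d0*(cnj a * a + cnj c * c) + b*d1*(cnj b * a + cnj e * c)"
    by (simp add: algebra_simps)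
  then show "(a*d0*cnj a + b*d1*cnj b) * a + (a*d0*cnj c + b*d1*cnj e) * c = d0 * a" using assms by simp
  have "(c*d0*cnj a + e*d1*cnj b) * a + (c*d0*cnj c + e*d1*cnj e) * c = c*d0*(cnj a * a + cnj c * c) + e*d1*(cnj b * a + cnj e * c)"
    by (simp add: algebra_simps)
  then show "(c*d0*cnj a + e*d1*cnj b) * a + (c*d0*cnj c + e*d1*cnj e) * c = d0 * c" using assms by simp
qed



lemma eig_sq:
  fixes a c q d m r p :: complex
  assumes n: "cnj a * a + cnj c * c = 1" and K: "p * p + q * cnj q = 1"
    and e1: "(m + r * p) * a + r * q * c = d * a" and e2: "r * cnj q * a + (m - r * p) * c = d * c"
  shows "(d - m)^2 = r^2"
proof -
  have h1: "(d - m) * a = r * (p * a + q * c)" using e1 by (simp add: algebra_simps)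
  have h2: "(d - m) * c = r * (cnj q * a - p * c)" using e2 by (simp add: algebra_simps)
  have "(d - m)^2 * a = (d - m) * ((d - m) * a)" by (simp add: power2_eq_square)
  also have "\<dots> = (d - m) * (r * (p * a + q * c))" by (simp add: h1)
  also have "\<dots> = r * (p * ((d - m) * a) + q * ((d - m) * c))" by (simp add: algebra_simps)
  also have "\<dots> = r * (p * (r * (p * a + q * c)) + q * (r * (cnj q * a - p * c)))"
    by (simp only: h1 h2)
  also have "\<dots> = r^2 * ((p * p + q * cnj q) * a)" by (simp add: algebra_simps power2_eq_square)
  finally have A: "(d - m)^2 * a = r^2 * a" using K by simp
  have "(d - m)^2 * c = (d - m) * ((d - m) * c)" by (simp add: power2_eq_square)
  also have "\<dots> = (d - m) * (r * (cnj q * a - p * c))" by (simp add: h2)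
  also have "\<dots> = r * (cnj q * ((d - m) * a) - p * ((d - m) * c))" by (simp add: algebra_simps)
  also have "\<dots> = r * (cnj q * (r * (p * a + q * c)) - p * (r * (cnj q * a - p * c)))"
    by (simp only: h1 h2)
  also have "\<dots> = r^2 * ((p * p + q * cnj q) * c)" by (simp add: algebra_simps power2_eq_square)
  finally have C: "(d - m)^2 * c = r^2 * c" using K by simp
  have "(d - m)^2 = (d - m)^2 * (cnj a * a + cnj c * c)" using n by simp
  also have "\<dots> = cnj a * ((d - m)^2 * a) + cnj c * ((d - m)^2 * c)" by (simp add: algebra_simps)
  also have "\<dots> = cnj a * (r^2 * a) + cnj c * (r^2 * c)" by (simp only: A C)
  also have "\<dots> = r^2 * (cnj a * a + cnj c * c)" by (simp add: algebra_simps)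
  finally show ?thesis using n by simp
qed

lemma col_eq2:
  fixes a b c e d0 d1 :: complex
  assumes "cnj b * b + cnj e * e = 1" "cnj a * b + cnj c * e = 0"
  shows "(a*d0*cnj a + b*d1*cnj b) * b + (a*d0*cnj c + b*d1*cnj e) * e = d1 * b"
        "(c*d0*cnj a + e*d1*cnj b) * b + (c*d0*cnj c + e*d1*cnj e) * e = d1 * e"
proof -
  have "(a*d0*cnj a + b*d1*cnj b) * b + (a*d0*cnj c + b*d1*cnj e) * e = a*d0*(cnj a * b + cnj c * e) + b*d1*(cnj b * b + cnj e * e)"
    by (simp add: algebra_simps)
  then show "(a*d0*cnj a + b*d1*cnj b) * b + (a*d0*cnj c + b*d1*cnj e) * e = d1 * b" using assms by simp
  have "(c*d0*cnj a + e*d1*cnj b) * b + (c*d0*cnj c + e*d1*cnj e) * e = c*d0*(cnj a * b + cnj c * e) + e*d1*(cnj b * b + cnj e * e)"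
    by (simp add: algebra_simps)
  then show "(c*d0*cnj a + e*d1*cnj b) * b + (c*d0*cnj c + e*d1*cnj e) * e = d1 * e" using assms by simp
qed

lemma eps_cases:
  fixes d m r :: real
  assumes "(complex_of_real d - complex_of_real m)^2 = (complex_of_real r)^2" "r > 0"
  shows "\<exists>\<epsilon>. d = m + r * \<epsilon> \<and> (\<epsilon> = 1 \<or> \<epsilon> = -1)"
proof -
  have "complex_of_real ((d - m)^2) = complex_of_real (r^2)" using assms(1) by simp
  then have "(d - m)^2 = r^2" using of_real_eq_iff by blast
  then have "d - m = r \<or> d - m = - r" using power2_eq_iff by blast
  then show ?thesis by (metis add_diff_cancel_left' diff_add_cancel mult.right_neutral mult_minus1_right)
qed



lemma K_unitary:
  fixes p :: real and q :: complex
  assumes hK: "p^2 + (cmod q)^2 = 1"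
  shows "\<exists>U. unitary_op 2 U \<and> M2 p q (cnj q) (- p) = U * M2 1 0 0 (-1) * mat_adjoint U"
proof (cases "p = -1")
  case True
  then have "(cmod q)^2 = 0" using hK by simp
  then have "q = 0" by simp
  then show ?thesis using True
    by (intro exI[of _ "M2 0 1 1 0"]) (simp add: unitary_M2)
next
  case False
  have "p^2 \<le> 1" using hK by (metis le_add_same_cancel1 zero_le_power2)
  have "p \<ge> -1"
  proof (rule ccontr)
    assume "\<not> p \<ge> -1"
    then have "1 < (-p) * (-p)" by (intro less_1_mult) auto
    then show False using \<open>p^2 \<le> 1\<close> by (simp add: power2_eq_square)
  qed
  with False have pp: "1 + p > 0" by simp
  define N where "N = sqrt (2 * (1 + p))"
  have N0: "N > 0" using pp by (simp add: N_def)
  have NN: "N * N = 2 * (1 + p)" using pp by (simp add: N_def)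
  define s where "s = (1 + p) / N"
  define t where "t = 1 / N"
  have qq: "q * cnj q = complex_of_real (1 - p^2)"
  proof -
    have "q * cnj q = complex_of_real ((cmod q)^2)" using complex_norm_square[of q] by simp
    also have "(cmod q)^2 = 1 - p^2" using hK by simp
    finally show ?thesis .
  qed
  have st: "s * s = (1+p)*(1+p) / (N*N)" "t * t = 1 / (N * N)" "s * t = (1 + p) / (N * N)"
    unfolding s_def t_def by simp_all
  have F1: "s*s + t*t*(1 - p^2) = 1" unfolding st NN using pp
    by (simp add: divide_simps power2_eq_square) (simp add: algebra_simps)
  have F2: "s*s - t*t*(1 - p^2) = p" unfolding st NN using pp
    by (simp add: divide_simps power2_eq_square) (simp add: algebra_simps)
  have F3: "2 * s * t = 1"
  proof -
    have "(1 + p) / (N * N) = 1 / 2" unfolding NN using pp by (simp add: field_simps)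
    then have "s * t = 1 / 2" using st(3) by (simp only:)
    then show ?thesis by (simp add: mult.assoc)
  qed
  have C1: "complex_of_real s * s + t * t * (q * cnj q) = 1"
    unfolding qq using F1 by (metis of_real_1 of_real_add of_real_mult)
  have C2: "complex_of_real s * s - t * t * (q * cnj q) = p"
    unfolding qq using F2 by (metis of_real_diff of_real_mult)
  have C3: "2 * complex_of_real s * t = 1" using F3 by (metis of_real_1 of_real_mult of_real_numeral)
  let ?U = "M2 s (- (t * q)) (t * cnj q) s"
  have "unitary_op 2 ?U"
    unfolding unitary_M2 using C1 by (simp add: algebra_simps)
  moreover have "M2 p q (cnj q) (- p) = ?U * M2 1 0 0 (-1) * mat_adjoint ?U"
  proof -
    have "complex_of_real s * s - t * q * (t * cnj q) = p" using C2 by (simp add: algebra_simps)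
    moreover have "complex_of_real s * (t * q) + t * q * s = q"
    proof -
      have "complex_of_real s * (t * q) + t * q * s = (2 * complex_of_real s * t) * q" by (simp add: algebra_simps)
      then show ?thesis using C3 by simp
    qed
    moreover have "complex_of_real t * cnj q * s + s * (t * cnj q) = cnj q"
    proof -
      have "complex_of_real t * cnj q * s + s * (t * cnj q) = (2 * complex_of_real s * t) * cnj q" by (simp add: algebra_simps)
      then show ?thesis using C3 by simp
    qed
    moreover have "complex_of_real t * cnj q * (t * q) - s * s = - p" using C2 by (simp add: algebra_simps)
    ultimately show ?thesis by simp
  qed
  ultimately show ?thesis by blast
qed



lemma conj_diag: "M2 a b c e * M2 x 0 0 y * mat_adjoint (M2 a b c e) =
  M2 (a*x*cnj a + b*y*cnj b) (a*x*cnj c + b*y*cnj e) (c*x*cnj a + e*y*cnj b) (c*x*cnj c + e*y*cnj e)"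
  by simp

lemma lin2: fixes a b x y \<alpha> \<beta> :: complex shows
  "a*(\<alpha> + \<beta>*x)*g + b*(\<alpha> + \<beta>*y)*h = \<alpha>*(a*g + b*h) + \<beta>*(a*x*g + b*y*h)"
  by (simp add: algebra_simps)

lemma K_complex: "p^2 + (cmod q)^2 = 1 \<Longrightarrow> complex_of_real p * complex_of_real p + q * cnj q = 1"
proof -
  assume h: "p^2 + (cmod q)^2 = 1"
  have "q * cnj q = complex_of_real ((cmod q)^2)" using complex_norm_square[of q] by simp
  then have "complex_of_real p * complex_of_real p + q * cnj q = complex_of_real (p^2 + (cmod q)^2)"
    by (simp add: power2_eq_square)
  then show ?thesis using h by simp
qed

lemma matfun_K:
  fixes p m r :: real and q :: complex and f :: "real \<Rightarrow> complex"
  assumes hK: "p^2 + (cmod q)^2 = 1" and r: "r > 0"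
  shows "matfun 2 f (M2 (of_real (m + r*p)) (of_real r * q) (of_real r * cnj q) (of_real (m - r*p))) =
     M2 ((f (m + r) + f (m - r)) / 2 + (f (m + r) - f (m - r)) / 2 * of_real p)
        ((f (m + r) - f (m - r)) / 2 * q) ((f (m + r) - f (m - r)) / 2 * cnj q)
        ((f (m + r) + f (m - r)) / 2 - (f (m + r) - f (m - r)) / 2 * of_real p)"
    (is "matfun 2 f ?A = ?B")
proof -
  define u where "u = (f (m + r) + f (m - r)) / 2"
  define v where "v = (f (m + r) - f (m - r)) / 2"
  have fp: "f (m + r) = u + v * 1" and fm: "f (m - r) = u + v * (-1)" by (simp_all add: u_def v_def field_simps)
  have B: "?B = M2 (u + v*p) (v*q) (v*cnj q) (u - v*p)" by (simp add: u_def v_def)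
  have KC: "complex_of_real p * complex_of_real p + q * cnj q = 1" using K_complex[OF hK] .
  have r0: "complex_of_real r \<noteq> 0" using r by simp
  have ex: "\<exists>U d. unitary_op 2 U \<and> ?A = U * diag_op 2 (\<lambda>i. complex_of_real (d i)) * mat_adjoint U \<and>
                 ?B = U * diag_op 2 (\<lambda>i. f (d i)) * mat_adjoint U"
  proof -
    obtain U where U: "unitary_op 2 U" "M2 p q (cnj q) (- p) = U * M2 1 0 0 (-1) * mat_adjoint U"
      using K_unitary[OF hK] by blast
    obtain a b c e where Ue: "U = M2 a b c e"
      using M2_eta[of U] U(1) unfolding unitary_op_def by blast
    note uni = U(1)[unfolded Ue unitary_M2]
    have Keq: "complex_of_real p = a * 1 * cnj a + b * (-1) * cnj b \<and> q = a * 1 * cnj c + b * (-1) * cnj e \<and>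
      cnj q = c * 1 * cnj a + e * (-1) * cnj b \<and> complex_of_real (- p) = c * 1 * cnj c + e * (-1) * cnj e"
      using U(2) unfolding Ue conj_diag M2_eq .
    then have K1: "complex_of_real p = a * 1 * cnj a + b * (-1) * cnj b" and K2: "q = a * 1 * cnj c + b * (-1) * cnj e"
      and K3: "cnj q = c * 1 * cnj a + e * (-1) * cnj b" and K4: "complex_of_real (- p) = c * 1 * cnj c + e * (-1) * cnj e"
      by blast+
    have E: "a * cnj a - b * cnj b = complex_of_real p" "a * cnj c - b * cnj e = q"
      "c * cnj a - e * cnj b = cnj q" "c * cnj c - e * cnj e = - complex_of_real p"
      using K1 apply simp using K2 apply simp using K3 apply simp using K4 by simp
    have uu: "a * cnj a + b * cnj b = 1" "a * cnj c + b * cnj e = 0" "c * cnj a + e * cnj b = 0" "c * cnj c + e * cnj e = 1"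
      using uni by simp_all
    define d where "d i = (if i = 0 then m + r else m - r)" for i :: nat
    have dd: "diag_op 2 (\<lambda>i. complex_of_real (d i)) = M2 (of_real m + of_real r * 1) 0 0 (of_real m + of_real r * (-1))"
      unfolding M2_diag d_def by simp
    have df: "diag_op 2 (\<lambda>i. f (d i)) = M2 (u + v * 1) 0 0 (u + v * (-1))"
      unfolding M2_diag d_def using fp fm by simp
    have "?A = U * diag_op 2 (\<lambda>i. complex_of_real (d i)) * mat_adjoint U"
      unfolding dd Ue conj_diag lin2 M2_eq using uu E by simp
    moreover have "?B = U * diag_op 2 (\<lambda>i. f (d i)) * mat_adjoint U"
      unfolding df Ue conj_diag lin2 B M2_eq using uu E by simp
    ultimately show ?thesis using U(1) by blast
  qed
  have uniq: "B' = ?B" if H: "\<exists>U d. unitary_op 2 U \<and> ?A = U * diag_op 2 (\<lambda>i. complex_of_real (d i)) * mat_adjoint U \<and>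
                 B' = U * diag_op 2 (\<lambda>i. f (d i)) * mat_adjoint U" for B'
  proof -
    obtain U d where U: "unitary_op 2 U" "?A = U * diag_op 2 (\<lambda>i. complex_of_real (d i)) * mat_adjoint U"
       "B' = U * diag_op 2 (\<lambda>i. f (d i)) * mat_adjoint U" using H by blast
    obtain a b c e where Ue: "U = M2 a b c e"
      using M2_eta[of U] U(1) unfolding unitary_op_def by blast
    note uni = U(1)[unfolded Ue unitary_M2]
    define d0 where "d0 = complex_of_real (d 0)"
    define d1 where "d1 = complex_of_real (d 1)"
    have Aeq: "complex_of_real (m + r*p) = a*d0*cnj a + b*d1*cnj b" "complex_of_real r * q = a*d0*cnj c + b*d1*cnj e"
      "complex_of_real r * cnj q = c*d0*cnj a + e*d1*cnj b" "complex_of_real (m - r*p) = c*d0*cnj c + e*d1*cnj e"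
      using U(2) unfolding Ue M2_diag conj_diag d0_def d1_def by simp_all
    have "(d0 - of_real m)^2 = (of_real r)^2"
    proof (rule eig_sq[of a c "of_real p" q])
      show "cnj a * a + cnj c * c = 1" using uni by simp
      show "complex_of_real p * complex_of_real p + q * cnj q = 1" by (rule KC)
      show "(complex_of_real m + complex_of_real r * complex_of_real p) * a + complex_of_real r * q * c = d0 * a"
        using col_eq(1)[of a c b e d0 d1] uni Aeq by simp
      show "complex_of_real r * cnj q * a + (complex_of_real m - complex_of_real r * complex_of_real p) * c = d0 * c"
        using col_eq(2)[of a c b e d0 d1] uni Aeq by simp
    qed
    then obtain \<epsilon>0 where e0: "d 0 = m + r * \<epsilon>0" "\<epsilon>0 = 1 \<or> \<epsilon>0 = -1"
      using eps_cases[of "d 0" m r] r unfolding d0_def by blast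
    have "(d1 - of_real m)^2 = (of_real r)^2"
    proof (rule eig_sq[of b e "of_real p" q])
      show "cnj b * b + cnj e * e = 1" using uni by simp
      show "complex_of_real p * complex_of_real p + q * cnj q = 1" by (rule KC)
      show "(complex_of_real m + complex_of_real r * complex_of_real p) * b + complex_of_real r * q * e = d1 * b"
        using col_eq2(1)[of b e a c d0 d1] uni Aeq by simp
      show "complex_of_real r * cnj q * b + (complex_of_real m - complex_of_real r * complex_of_real p) * e = d1 * e"
        using col_eq2(2)[of b e a c d0 d1] uni Aeq by simp
    qed
    then obtain \<epsilon>1 where e1: "d 1 = m + r * \<epsilon>1" "\<epsilon>1 = 1 \<or> \<epsilon>1 = -1"
      using eps_cases[of "d 1" m r] r unfolding d1_def by blast
    have f0: "f (d 0) = u + v * of_real \<epsilon>0" using e0 fp fm by auto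
    have f1: "f (d 1) = u + v * of_real \<epsilon>1" using e1 fp fm by auto
    have D0: "d0 = of_real m + of_real r * of_real \<epsilon>0" unfolding d0_def e0 by simp
    have D1: "d1 = of_real m + of_real r * of_real \<epsilon>1" unfolding d1_def e1 by simp
    define Y00 where "Y00 = a*of_real \<epsilon>0*cnj a + b*of_real \<epsilon>1*cnj b"
    define Y01 where "Y01 = a*of_real \<epsilon>0*cnj c + b*of_real \<epsilon>1*cnj e"
    define Y10 where "Y10 = c*of_real \<epsilon>0*cnj a + e*of_real \<epsilon>1*cnj b"
    define Y11 where "Y11 = c*of_real \<epsilon>0*cnj c + e*of_real \<epsilon>1*cnj e"
    have L: "a*d0*cnj a + b*d1*cnj b = of_real m + of_real r * Y00"
            "a*d0*cnj c + b*d1*cnj e = of_real r * Y01"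
            "c*d0*cnj a + e*d1*cnj b = of_real r * Y10"
            "c*d0*cnj c + e*d1*cnj e = of_real m + of_real r * Y11"
      unfolding D0 D1 lin2 Y00_def Y01_def Y10_def Y11_def using uni by simp_all
    have "of_real r * Y00 = of_real r * of_real p" using Aeq(1) L(1) by auto
    then have Y00: "Y00 = of_real p" using r0 by simp
    have Y01: "Y01 = q" using Aeq(2) L(2) r0 by simp
    have Y10: "Y10 = cnj q" using Aeq(3) L(3) r0 by simp
    have "of_real r * Y11 = of_real r * (- of_real p)" using Aeq(4) L(4) by auto
    then have Y11: "Y11 = - of_real p" using r0 by (metis mult_cancel_left)
    have "B' = M2 (u + v * Y00) (v * Y01) (v * Y10) (u + v * Y11)"
      unfolding U(3) Ue M2_diag f0 f1 conj_diag lin2 Y00_def Y01_def Y10_def Y11_def using uni by simp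
    then show ?thesis unfolding B Y00 Y01 Y10 Y11 by simp
  qed
  show ?thesis unfolding matfun_def
    by (rule the_equality) (use ex uniq in blast)+
qed



definition Km :: "real \<Rightarrow> complex \<Rightarrow> complex mat" where
  "Km p q = M2 (of_real p) q (cnj q) (- of_real p)"

lemma Km_carrier[simp]: "Km p q \<in> carrier_mat 2 2" "dim_row (Km p q) = 2" "dim_col (Km p q) = 2"
  by (simp_all add: Km_def)

lemma KK: "p^2 + (cmod q)^2 = 1 \<Longrightarrow> Km p q * Km p q = M2 1 0 0 1"
proof -
  assume h: "p^2 + (cmod q)^2 = 1"
  have KC: "complex_of_real p * complex_of_real p + q * cnj q = 1" using K_complex[OF h] .
  have "cnj q * q + complex_of_real p * complex_of_real p = 1" using KC by (simp add: algebra_simps)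
  then show ?thesis unfolding Km_def using KC by (simp add: algebra_simps)
qed

lemma comm2_pure: "commutator (M2 k0 k1 k2 k3) (commutator (M2 k0 k1 k2 k3) (M2 x y z w)) =
   (M2 k0 k1 k2 k3 * M2 k0 k1 k2 k3) * M2 x y z w - 2 \<cdot>\<^sub>m (M2 k0 k1 k2 k3 * M2 x y z w * M2 k0 k1 k2 k3)
   + M2 x y z w * (M2 k0 k1 k2 k3 * M2 k0 k1 k2 k3)"
  unfolding commutator_def by (simp add: algebra_simps)

lemma comm2: assumes "K * K = M2 1 0 0 1" "K \<in> carrier_mat 2 2" "\<rho> \<in> carrier_mat 2 2"
  shows "commutator K (commutator K \<rho>) = 2 \<cdot>\<^sub>m \<rho> - 2 \<cdot>\<^sub>m (K * \<rho> * K)"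
proof -
  obtain k0 k1 k2 k3 where K: "K = M2 k0 k1 k2 k3" using M2_eta[OF assms(2)] by blast
  obtain x y z w where R: "\<rho> = M2 x y z w" using M2_eta[OF assms(3)] by blast
  have e: "M2 k0 k1 k2 k3 * M2 k0 k1 k2 k3 = M2 1 0 0 1" using assms(1) unfolding K .
  have "commutator K (commutator K \<rho>) = M2 1 0 0 1 * \<rho> - 2 \<cdot>\<^sub>m (K * \<rho> * K) + \<rho> * M2 1 0 0 1"
    using comm2_pure[of k0 k1 k2 k3 x y z w] unfolding e K R .
  then show ?thesis unfolding K R by (simp add: algebra_simps)
qed

lemma dissip_core:
  fixes u v p q x y z w :: complex
  defines "G \<equiv> M2 (u + v*p) (v*q) (v*cnj q) (u - v*p)"
      and "Ga \<equiv> M2 (cnj u + cnj v*p) (cnj v*q) (cnj v*cnj q) (cnj u - cnj v*p)"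
      and "N \<equiv> M2 (u*cnj u + v*cnj v + (cnj u*v + u*cnj v)*p) ((cnj u*v + u*cnj v)*q)
                 ((cnj u*v + u*cnj v)*cnj q) (u*cnj u + v*cnj v - (cnj u*v + u*cnj v)*p)"
      and "K \<equiv> M2 p q (cnj q) (-p)"
      and "R \<equiv> M2 x y z w"
  shows "G * R * Ga - (1/2) \<cdot>\<^sub>m (N * R + R * N) =
     ((v * cnj u - u * cnj v)/2) \<cdot>\<^sub>m commutator K R + (- (v * cnj v)/2) \<cdot>\<^sub>m (2 \<cdot>\<^sub>m R - 2 \<cdot>\<^sub>m (K * R * K))"
  unfolding G_def Ga_def N_def K_def R_def commutator_def
  by (simp add: field_simps)

lemma GaG:
  fixes u v q :: complex and p :: real
  assumes KC: "complex_of_real p * complex_of_real p + q * cnj q = 1"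
  shows "mat_adjoint (M2 (u + v*p) (v*q) (v*cnj q) (u - v*p)) * M2 (u + v*p) (v*q) (v*cnj q) (u - v*p) =
    M2 (u*cnj u + v*cnj v + (cnj u*v + u*cnj v)*p) ((cnj u*v + u*cnj v)*q)
                 ((cnj u*v + u*cnj v)*cnj q) (u*cnj u + v*cnj v - (cnj u*v + u*cnj v)*p)"
proof -
  let ?P = "complex_of_real p"
  have e1: "(cnj u + cnj v * ?P) * (u + v * ?P) + cnj v * q * (v * cnj q) = u*cnj u + (cnj u*v + u*cnj v)*?P + v*cnj v*(?P*?P + q*cnj q)"
    by (simp add: algebra_simps)
  have e2: "(cnj u + cnj v * ?P) * (v * q) + cnj v * q * (u - v * ?P) = (cnj u*v + u*cnj v)*q"
    by (simp add: algebra_simps)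
  have e3: "cnj v * cnj q * (u + v * ?P) + (cnj u - cnj v * ?P) * (v * cnj q) = (cnj u*v + u*cnj v)*cnj q"
    by (simp add: algebra_simps)
  have e4: "cnj v * cnj q * (v * q) + (cnj u - cnj v * ?P) * (u - v * ?P) = u*cnj u - (cnj u*v + u*cnj v)*?P + v*cnj v*(?P*?P + q*cnj q)"
    by (simp add: algebra_simps)
  show ?thesis unfolding M2_adj M2_mult M2_eq using e1 e2 e3 e4 KC by simp
qed

lemma mat_sum_cong: "(\<And>\<alpha>. \<alpha> \<in> I \<Longrightarrow> F \<alpha> = G \<alpha>) \<Longrightarrow> mat_sum n F I = mat_sum n G I"
  unfolding mat_sum_def by (metis (mono_tags, lifting) sum.cong)

lemma mat_sum_lin:
  assumes "X \<in> carrier_mat 2 2" "Y \<in> carrier_mat 2 2"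
  shows "mat_sum 2 (\<lambda>\<alpha>. c1 \<alpha> \<cdot>\<^sub>m X + c2 \<alpha> \<cdot>\<^sub>m Y) I = (\<Sum>\<alpha>\<in>I. c1 \<alpha>) \<cdot>\<^sub>m X + (\<Sum>\<alpha>\<in>I. c2 \<alpha>) \<cdot>\<^sub>m Y"
  by (rule eq_matI) (use assms in \<open>auto simp: mat_sum_def sum.distrib sum_distrib_right\<close>)

lemma lindblad_formula:
  fixes p m r :: real and q :: complex and u v :: "'a \<Rightarrow> complex"
  assumes hK: "p^2 + (cmod q)^2 = 1"
    and G: "\<And>\<alpha>. \<alpha> \<in> I \<Longrightarrow> \<Gamma> \<alpha> = M2 (u \<alpha> + v \<alpha> * of_real p) (v \<alpha> * q) (v \<alpha> * cnj q) (u \<alpha> - v \<alpha> * of_real p)"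
    and R: "\<rho> \<in> carrier_mat 2 2"
  shows "lindbladian 2 (M2 (of_real (m + r*p)) (of_real r * q) (of_real r * cnj q) (of_real (m - r*p))) I \<Gamma> \<rho> =
    (- \<i> * of_real r + (\<Sum>\<alpha>\<in>I. (v \<alpha> * cnj (u \<alpha>) - u \<alpha> * cnj (v \<alpha>))/2)) \<cdot>\<^sub>m commutator (Km p q) \<rho>
    + (\<Sum>\<alpha>\<in>I. - (v \<alpha> * cnj (v \<alpha>))/2) \<cdot>\<^sub>m (2 \<cdot>\<^sub>m \<rho> - 2 \<cdot>\<^sub>m (Km p q * \<rho> * Km p q))"
proof -
  have KC: "complex_of_real p * complex_of_real p + q * cnj q = 1" using K_complex[OF hK] .
  obtain x y z w where Rx: "\<rho> = M2 x y z w" using M2_eta[OF R] by blast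
  let ?X = "commutator (Km p q) \<rho>"
  let ?Y = "2 \<cdot>\<^sub>m \<rho> - 2 \<cdot>\<^sub>m (Km p q * \<rho> * Km p q)"
  have XY: "?X \<in> carrier_mat 2 2" "?Y \<in> carrier_mat 2 2" unfolding Rx Km_def by simp_all
  have summand: "\<Gamma> \<alpha> * \<rho> * mat_adjoint (\<Gamma> \<alpha>)
        - (1/2) \<cdot>\<^sub>m (mat_adjoint (\<Gamma> \<alpha>) * \<Gamma> \<alpha> * \<rho> + \<rho> * mat_adjoint (\<Gamma> \<alpha>) * \<Gamma> \<alpha>)
      = ((v \<alpha> * cnj (u \<alpha>) - u \<alpha> * cnj (v \<alpha>))/2) \<cdot>\<^sub>m ?X + (- (v \<alpha> * cnj (v \<alpha>))/2) \<cdot>\<^sub>m ?Y"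
    if a: "\<alpha> \<in> I" for \<alpha>
  proof -
    let ?G = "M2 (u \<alpha> + v \<alpha> * of_real p) (v \<alpha> * q) (v \<alpha> * cnj q) (u \<alpha> - v \<alpha> * of_real p)"
    have ass: "\<rho> * mat_adjoint ?G * ?G = \<rho> * (mat_adjoint ?G * ?G)"
      unfolding Rx by (rule assoc_mult_mat[of _ 2 2 _ 2 _ 2]) auto
    show ?thesis unfolding G[OF a] ass GaG[OF KC]
      using dissip_core[of "u \<alpha>" "v \<alpha>" "of_real p" q x y z w] unfolding Rx Km_def by simp
  qed
  have comm: "commutator (M2 (of_real (m + r*p)) (of_real r * q) (of_real r * cnj q) (of_real (m - r*p))) \<rho> = of_real r \<cdot>\<^sub>m ?X"
    unfolding Rx Km_def commutator_def by (simp add: algebra_simps)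
  have "lindbladian 2 (M2 (of_real (m + r*p)) (of_real r * q) (of_real r * cnj q) (of_real (m - r*p))) I \<Gamma> \<rho> =
     (- \<i>) \<cdot>\<^sub>m (of_real r \<cdot>\<^sub>m ?X) + ((\<Sum>\<alpha>\<in>I. (v \<alpha> * cnj (u \<alpha>) - u \<alpha> * cnj (v \<alpha>))/2) \<cdot>\<^sub>m ?X + (\<Sum>\<alpha>\<in>I. - (v \<alpha> * cnj (v \<alpha>))/2) \<cdot>\<^sub>m ?Y)"
  proof -
    have S: "mat_sum 2 (\<lambda>\<alpha>. \<Gamma> \<alpha> * \<rho> * mat_adjoint (\<Gamma> \<alpha>)
        - (1/2) \<cdot>\<^sub>m (mat_adjoint (\<Gamma> \<alpha>) * \<Gamma> \<alpha> * \<rho> + \<rho> * mat_adjoint (\<Gamma> \<alpha>) * \<Gamma> \<alpha>)) I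
      = mat_sum 2 (\<lambda>\<alpha>. ((v \<alpha> * cnj (u \<alpha>) - u \<alpha> * cnj (v \<alpha>))/2) \<cdot>\<^sub>m ?X + (- (v \<alpha> * cnj (v \<alpha>))/2) \<cdot>\<^sub>m ?Y) I"
      by (rule mat_sum_cong) (rule summand)
    show ?thesis unfolding lindbladian_def comm S mat_sum_lin[OF XY] ..
  qed
  also have "\<dots> = (- \<i> * of_real r + (\<Sum>\<alpha>\<in>I. (v \<alpha> * cnj (u \<alpha>) - u \<alpha> * cnj (v \<alpha>))/2)) \<cdot>\<^sub>m ?X
    + (\<Sum>\<alpha>\<in>I. - (v \<alpha> * cnj (v \<alpha>))/2) \<cdot>\<^sub>m ?Y"
    by (rule eq_matI) (use XY in \<open>auto simp: algebra_simps\<close>)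
  finally show ?thesis .
qed



lemma M2_index_Suc[simp]: "M2 a b c d $$ (0, Suc 0) = b" "M2 a b c d $$ (Suc 0, 0) = c" "M2 a b c d $$ (Suc 0, Suc 0) = d"
  by (simp_all add: M2_def)

lemma M2_units': "mat_unit 2 0 (Suc 0) = M2 0 1 0 0" "mat_unit 2 (Suc 0) 0 = M2 0 0 1 0" "mat_unit 2 (Suc 0) (Suc 0) = M2 0 0 0 1"
  using M2_units by simp_all

lemma less4: "(k::nat) < 4 \<longleftrightarrow> k = 0 \<or> k = 1 \<or> k = 2 \<or> k = 3" by auto

lemma sum4: "(\<Sum>i\<in>{0..<4::nat}. f i) = f 0 + f 1 + f 2 + f 3"
  by (simp add: eval_nat_numeral atLeast0LessThan lessThan_Suc add.assoc add.commute add.left_commute)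

definition sop :: "complex mat \<Rightarrow> complex mat \<Rightarrow> complex \<Rightarrow> complex mat" where
  "sop R K cc = mat 4 4 (\<lambda>(k,l). cc * (2 * R $$ (k div 2, l div 2) * R $$ (l mod 2, k mod 2)
      - 2 * K $$ (k div 2, l div 2) * K $$ (l mod 2, k mod 2)))"

definition Pm :: "complex mat \<Rightarrow> complex mat" where
  "Pm U = mat 4 4 (\<lambda>(k,l). U $$ (k div 2, l div 2) * cnj (U $$ (k mod 2, l mod 2)))"

definition Qm :: "complex mat \<Rightarrow> complex mat" where
  "Qm U = mat 4 4 (\<lambda>(k,l). cnj (U $$ (l div 2, k div 2)) * U $$ (l mod 2, k mod 2))"

definition Dg :: "complex \<Rightarrow> complex mat" where
  "Dg mu = mat 4 4 (\<lambda>(k,l). if k = l \<and> (k = 1 \<or> k = 2) then mu else 0)"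

lemma pure_sim:
  "Pm (M2 a b c e) * Dg (4 * cc) * Qm (M2 a b c e) =
     sop (M2 a b c e * mat_adjoint (M2 a b c e)) (M2 a b c e * M2 1 0 0 (-1) * mat_adjoint (M2 a b c e)) cc"
  apply (rule eq_matI)
  apply (auto simp: less4 Pm_def Qm_def Dg_def sop_def scalar_prod_def sum4)
  apply (simp_all add: algebra_simps)
  done

lemma pure_PQ:
  "Pm (M2 a b c e) * Qm (M2 a b c e) = mat 4 4 (\<lambda>(k,l). R $$ (k div 2, l div 2) * R $$ (l mod 2, k mod 2))"
  if "R = M2 a b c e * mat_adjoint (M2 a b c e)"
  unfolding that
  apply (rule eq_matI)
  apply (auto simp: less4 Pm_def Qm_def scalar_prod_def sum4)
  apply (simp_all add: algebra_simps)
  done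

lemma pure_QP:
  "Qm (M2 a b c e) * Pm (M2 a b c e) = mat 4 4 (\<lambda>(k,l). S $$ (k div 2, l div 2) * S $$ (l mod 2, k mod 2))"
  if "S = mat_adjoint (M2 a b c e) * M2 a b c e"
  unfolding that
  apply (rule eq_matI)
  apply (auto simp: less4 Pm_def Qm_def scalar_prod_def sum4)
  apply (simp_all add: algebra_simps)
  done

lemma id4: "mat 4 4 (\<lambda>(k,l). M2 1 0 0 1 $$ (k div 2, l div 2) * M2 1 0 0 1 $$ (l mod 2, k mod 2)) = 1\<^sub>m 4"
  by (rule eq_matI) (auto simp: less4)

lemma superop_sop:
  "superop_mat 2 (\<lambda>\<rho>. cc \<cdot>\<^sub>m (2 \<cdot>\<^sub>m \<rho> - 2 \<cdot>\<^sub>m (M2 k0 k1 k2 k3 * \<rho> * M2 k0 k1 k2 k3))) = sop (M2 1 0 0 1) (M2 k0 k1 k2 k3) cc"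
  apply (rule eq_matI)
  apply (auto simp: less4 superop_mat_def sop_def M2_units M2_units')
  done

lemma superop_cong: "(\<And>\<rho>. \<rho> \<in> carrier_mat 2 2 \<Longrightarrow> L \<rho> = L' \<rho>) \<Longrightarrow> superop_mat 2 L = superop_mat 2 L'"
  unfolding superop_mat_def
  by (rule eq_matI) (auto simp: mat_unit_def)

lemma char_poly_Dg: "char_poly (Dg mu) = [:-mu, 1:]^2 * [:0, 1:]^2"
proof -
  have c: "Dg mu \<in> carrier_mat 4 4" by (simp add: Dg_def)
  have ut: "upper_triangular (Dg mu)" by (auto simp: upper_triangular_def Dg_def)
  have dm: "diag_mat (Dg mu) = [0, mu, mu, 0]"
    by (simp add: diag_mat_def Dg_def eval_nat_numeral upt_rec)
  show ?thesis unfolding char_poly_upper_triangular[OF c ut] dm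
    by (simp add: power2_eq_square algebra_simps)
qed

lemma order_Dg: assumes "mu \<noteq> 0" shows "Polynomial.order mu (char_poly (Dg mu)) = 2"
proof -
  have nz1: "[:-mu, 1:]^2 \<noteq> 0" by simp
  have nz2: "([:0, 1:] :: complex poly)^2 \<noteq> 0" by simp
  have "Polynomial.order mu ([:0, 1:]^2) = 0" by (rule order_0I) (use assms in simp)
  then show ?thesis unfolding char_poly_Dg
    using order_mult[of "[:-mu, 1:]^2" "[:0, 1:]^2" mu] nz1 nz2 order_power_n_n[of mu 2] by simp
qed

lemma not_md_zero:
  assumes "\<And>\<rho>. \<rho> \<in> carrier_mat 2 2 \<Longrightarrow> L \<rho> = 0\<^sub>m 2 2"
  shows "\<not> minimally_degenerate 2 L"
proof -
  have "superop_mat 2 L = 0\<^sub>m 4 4"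
    unfolding superop_mat_def by (rule eq_matI) (auto simp: assms mat_unit_def)
  moreover have "kernel_dim (0\<^sub>m 4 4 :: complex mat) = 4" by code_simp
  ultimately show ?thesis unfolding minimally_degenerate_def by simp
qed

lemma not_md_w0:
  fixes p :: real and q cc :: complex
  assumes hK: "p^2 + (cmod q)^2 = 1" and cc: "cc \<noteq> 0"
    and L: "\<And>\<rho>. \<rho> \<in> carrier_mat 2 2 \<Longrightarrow> L \<rho> = cc \<cdot>\<^sub>m (2 \<cdot>\<^sub>m \<rho> - 2 \<cdot>\<^sub>m (Km p q * \<rho> * Km p q))"
  shows "\<not> minimally_degenerate 2 L"
proof
  assume md: "minimally_degenerate 2 L"
  obtain U where U: "unitary_op 2 U" "M2 p q (cnj q) (- p) = U * M2 1 0 0 (-1) * mat_adjoint U"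
    using K_unitary[OF hK] by blast
  obtain a b c e where Ue: "U = M2 a b c e"
    using M2_eta[of U] U(1) unfolding unitary_op_def by blast
  have RU: "M2 a b c e * mat_adjoint (M2 a b c e) = M2 1 0 0 1" "mat_adjoint (M2 a b c e) * M2 a b c e = M2 1 0 0 1"
    using U(1) unfolding Ue unitary_op_def M2_one by auto
  have KU: "Km p q = M2 a b c e * M2 1 0 0 (-1) * mat_adjoint (M2 a b c e)"
    using U(2) unfolding Ue Km_def of_real_minus .
  define M where "M = superop_mat 2 L"
  have "M = superop_mat 2 (\<lambda>\<rho>. cc \<cdot>\<^sub>m (2 \<cdot>\<^sub>m \<rho> - 2 \<cdot>\<^sub>m (Km p q * \<rho> * Km p q)))"
    unfolding M_def by (rule superop_cong) (rule L)
  also have "\<dots> = sop (M2 1 0 0 1) (Km p q) cc" unfolding Km_def superop_sop ..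
  also have "\<dots> = Pm (M2 a b c e) * Dg (4 * cc) * Qm (M2 a b c e)"
    unfolding pure_sim RU(1)[symmetric] KU ..
  finally have Meq: "M = Pm (M2 a b c e) * Dg (4 * cc) * Qm (M2 a b c e)" .
  have PQ: "Pm (M2 a b c e) * Qm (M2 a b c e) = 1\<^sub>m 4" using pure_PQ[OF RU(1)[symmetric]] id4 by simp
  have QP: "Qm (M2 a b c e) * Pm (M2 a b c e) = 1\<^sub>m 4" using pure_QP[OF RU(2)[symmetric]] id4 by simp
  have sim: "similar_mat M (Dg (4 * cc))"
    by (rule similar_matI[of _ _ _ _ 4, OF _ PQ QP Meq]) (auto simp: M_def superop_mat_def Pm_def Qm_def Dg_def)
  have cp: "char_poly M = char_poly (Dg (4 * cc))" by (rule char_poly_similar[OF sim])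
  have Mc: "M \<in> carrier_mat 4 4" by (simp add: M_def superop_mat_def)
  have ev: "eigenvalue M (4 * cc)"
    unfolding eigenvalue_root_char_poly[OF Mc] cp char_poly_Dg by simp
  have "Polynomial.order (4 * cc) (char_poly M) = 2" unfolding cp by (rule order_Dg) (use cc in simp)
  moreover have "Polynomial.order (4 * cc) (char_poly M) = 1" using md ev cc unfolding minimally_degenerate_def M_def by simp
  ultimately show False by simp
qed



lemma matfun_scalar:
  fixes m :: real and f :: "real \<Rightarrow> complex"
  shows "matfun 2 f (M2 (of_real m) 0 0 (of_real m)) = M2 (f m) 0 0 (f m)"
proof -
  let ?A = "M2 (of_real m) 0 0 (of_real m)"
  let ?B = "M2 (f m) 0 0 (f m)"
  have ex: "\<exists>U d. unitary_op 2 U \<and> ?A = U * diag_op 2 (\<lambda>i. complex_of_real (d i)) * mat_adjoint U \<and>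
                 ?B = U * diag_op 2 (\<lambda>i. f (d i)) * mat_adjoint U"
    by (rule exI[of _ "M2 1 0 0 1"], rule exI[of _ "\<lambda>_. m"]) (simp add: unitary_M2 M2_diag)
  have uniq: "B' = ?B" if H: "\<exists>U d. unitary_op 2 U \<and> ?A = U * diag_op 2 (\<lambda>i. complex_of_real (d i)) * mat_adjoint U \<and>
                 B' = U * diag_op 2 (\<lambda>i. f (d i)) * mat_adjoint U" for B'
  proof -
    obtain U d where U: "unitary_op 2 U" "?A = U * diag_op 2 (\<lambda>i. complex_of_real (d i)) * mat_adjoint U"
       "B' = U * diag_op 2 (\<lambda>i. f (d i)) * mat_adjoint U" using H by blast
    obtain a b c e where Ue: "U = M2 a b c e"
      using M2_eta[of U] U(1) unfolding unitary_op_def by blast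
    note uni = U(1)[unfolded Ue unitary_M2]
    define d0 where "d0 = complex_of_real (d 0)"
    define d1 where "d1 = complex_of_real (d 1)"
    have AeqC: "complex_of_real m = a*d0*cnj a + b*d1*cnj b \<and> 0 = a*d0*cnj c + b*d1*cnj e \<and>
      0 = c*d0*cnj a + e*d1*cnj b \<and> complex_of_real m = c*d0*cnj c + e*d1*cnj e"
      using U(2) unfolding Ue M2_diag conj_diag M2_eq d0_def d1_def by blast
    then have Aeq: "complex_of_real m = a*d0*cnj a + b*d1*cnj b" "0 = a*d0*cnj c + b*d1*cnj e"
      "0 = c*d0*cnj a + e*d1*cnj b" "complex_of_real m = c*d0*cnj c + e*d1*cnj e" by blast+
    have c1: "of_real m * a = d0 * a" "of_real m * c = d0 * c"
      using col_eq[of a c b e d0 d1] uni Aeq by simp_all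
    have "(d0 - of_real m) * (cnj a * a + cnj c * c) = cnj a * (d0 * a - of_real m * a) + cnj c * (d0 * c - of_real m * c)"
      by (simp add: algebra_simps)
    then have "d0 = of_real m" using c1 uni by simp
    then have D0: "d 0 = m" unfolding d0_def by simp
    have c2: "of_real m * b = d1 * b" "of_real m * e = d1 * e"
      using col_eq2[of b e a c d0 d1] uni Aeq by simp_all
    have "(d1 - of_real m) * (cnj b * b + cnj e * e) = cnj b * (d1 * b - of_real m * b) + cnj e * (d1 * e - of_real m * e)"
      by (simp add: algebra_simps)
    then have "d1 = of_real m" using c2 uni by simp
    then have D1: "d 1 = m" unfolding d1_def by simp
    have e1: "a * f m * cnj a + b * f m * cnj b = f m * (a * cnj a + b * cnj b)"
      "a * f m * cnj c + b * f m * cnj e = f m * (a * cnj c + b * cnj e)"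
      "c * f m * cnj a + e * f m * cnj b = f m * (c * cnj a + e * cnj b)"
      "c * f m * cnj c + e * f m * cnj e = f m * (c * cnj c + e * cnj e)"
      by (simp_all add: algebra_simps)
    show ?thesis unfolding U(3) Ue M2_diag D0 D1 conj_diag e1 using uni by simp
  qed
  show ?thesis unfolding matfun_def
    by (rule the_equality) (use ex uniq in blast)+
qed

definition "zA Ht = Re (Ht $$ (0,0))"
definition "zD Ht = Re (Ht $$ (1,1))"
definition "zB Ht = Ht $$ (0,1)"
definition "zc Ht = (zA Ht - zD Ht) / 2"
definition "zm Ht = (zA Ht + zD Ht) / 2"
definition "zR2 Ht = (zc Ht)^2 + (Re (zB Ht))^2 + (Im (zB Ht))^2"
definition "zr Ht = zR2 Ht powr (1/2)"
definition "zir Ht = zR2 Ht powr (-1/2)"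
definition "zKp Ht = zc Ht * zir Ht"
definition "zKq Ht = zB Ht * of_real (zir Ht)"
definition "zv Ht (\<Gamma> :: 'i \<Rightarrow> complex mat) \<alpha> = (\<Gamma> \<alpha> $$ (0,0) * of_real (zKp Ht) + \<Gamma> \<alpha> $$ (0,1) * cnj (zKq Ht)
    + \<Gamma> \<alpha> $$ (1,0) * zKq Ht - \<Gamma> \<alpha> $$ (1,1) * of_real (zKp Ht)) / 2"
definition "zu (\<Gamma> :: 'i \<Rightarrow> complex mat) \<alpha> = (\<Gamma> \<alpha> $$ (0,0) + \<Gamma> \<alpha> $$ (1,1)) / 2"
definition "zw Ht I \<Gamma> = zr Ht - (\<Sum>\<alpha>\<in>I. Im (zv Ht \<Gamma> \<alpha> * cnj (zu \<Gamma> \<alpha>)))"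
definition "zsg Ht I \<Gamma> = (\<Sum>\<alpha>\<in>I. (Re (zv Ht \<Gamma> \<alpha>))^2 + (Im (zv Ht \<Gamma> \<alpha>))^2)"
definition "zH Ht I \<Gamma> = M2 (of_real (zw Ht I \<Gamma> * zKp Ht)) (of_real (zw Ht I \<Gamma>) * zKq Ht)
    (of_real (zw Ht I \<Gamma>) * cnj (zKq Ht)) (of_real (- (zw Ht I \<Gamma> * zKp Ht)))"
definition "zg Ht I \<Gamma> = zsg Ht I \<Gamma> * ((zw Ht I \<Gamma>)^2) powr (-1/2)"

lemma real_cnj: "cnj z = z \<Longrightarrow> z = complex_of_real (Re z)"
  by (simp add: complex_eq_iff)

lemma herm_form: "hermitian_op 2 Ht \<Longrightarrow> Ht = M2 (of_real (zA Ht)) (zB Ht) (cnj (zB Ht)) (of_real (zD Ht))"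
proof -
  assume h: "hermitian_op 2 Ht"
  then have c: "Ht \<in> carrier_mat 2 2" by (simp add: hermitian_op_def)
  obtain a b c' d where E: "Ht = M2 a b c' d" using M2_eta[OF c] by blast
  have "cnj a = a \<and> cnj c' = b \<and> cnj d = d" using h unfolding E hermitian_M2 .
  then have "a = of_real (Re a)" "d = of_real (Re d)" "c' = cnj b"
    using real_cnj[of a] real_cnj[of d] complex_cnj_cnj[of c'] by auto
  then show ?thesis unfolding E zA_def zB_def zD_def by simp
qed

lemma zR2_nonneg: "zR2 Ht \<ge> 0" by (simp add: zR2_def)

lemma zR2_zero: assumes "zR2 Ht = 0" shows "zB Ht = 0" "zA Ht = zD Ht"
proof -
  have "(zc Ht)^2 = 0 \<and> (Re (zB Ht))^2 = 0 \<and> (Im (zB Ht))^2 = 0" using assms unfolding zR2_def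
    by (smt (verit) zero_le_power2)
  then show "zB Ht = 0" "zA Ht = zD Ht" by (auto simp: zc_def complex_eq_iff)
qed

lemma zR2_pos:
  assumes "zR2 Ht > 0"
  shows "zr Ht > 0" "(zKp Ht)^2 + (cmod (zKq Ht))^2 = 1"
    "zm Ht + zr Ht * zKp Ht = zA Ht" "zm Ht - zr Ht * zKp Ht = zD Ht"
    "complex_of_real (zr Ht) * zKq Ht = zB Ht"
proof -
  let ?R = "zR2 Ht"
  have r: "zr Ht = sqrt ?R" unfolding zr_def using assms by (simp add: powr_half_sqrt)
  have ir: "zir Ht = 1 / sqrt ?R" unfolding zir_def using assms
    by (simp add: powr_minus_divide powr_half_sqrt)
  show "zr Ht > 0" using r assms by simp
  have rr: "sqrt ?R * sqrt ?R = ?R" using assms by simp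
  have s0: "sqrt ?R > 0" using assms by simp
  have "(zKp Ht)^2 + (cmod (zKq Ht))^2 = ((zc Ht)^2 + (cmod (zB Ht))^2) / (sqrt ?R * sqrt ?R)"
    unfolding zKp_def zKq_def ir using s0 by (simp add: norm_mult norm_divide power2_eq_square field_simps)
  also have "\<dots> = 1" unfolding rr using assms unfolding zR2_def by (simp add: cmod_power2 add.assoc)
  finally show "(zKp Ht)^2 + (cmod (zKq Ht))^2 = 1" .
  show "zm Ht + zr Ht * zKp Ht = zA Ht" "zm Ht - zr Ht * zKp Ht = zD Ht"
    unfolding zm_def zKp_def r ir zc_def using s0 by (simp_all add: field_simps)
  show "complex_of_real (zr Ht) * zKq Ht = zB Ht"
    unfolding zKq_def r ir using s0 by simp
qed



lemma Ht_form:
  assumes "hermitian_op 2 Ht" "zR2 Ht > 0"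
  shows "Ht = M2 (of_real (zm Ht + zr Ht * zKp Ht)) (of_real (zr Ht) * zKq Ht) (of_real (zr Ht) * cnj (zKq Ht)) (of_real (zm Ht - zr Ht * zKp Ht))"
proof -
  have "of_real (zr Ht) * cnj (zKq Ht) = cnj (of_real (zr Ht) * zKq Ht)" by simp
  then show ?thesis using herm_form[OF assms(1)] zR2_pos[OF assms(2)] by simp
qed

lemma pw_gamma:
  assumes dep: "dephasing 2 Ht I \<Gamma>" and pos: "zR2 Ht > 0" and a: "\<alpha> \<in> I"
  shows "\<Gamma> \<alpha> = M2 (zu \<Gamma> \<alpha> + zv Ht \<Gamma> \<alpha> * of_real (zKp Ht)) (zv Ht \<Gamma> \<alpha> * zKq Ht)
     (zv Ht \<Gamma> \<alpha> * cnj (zKq Ht)) (zu \<Gamma> \<alpha> - zv Ht \<Gamma> \<alpha> * of_real (zKp Ht))"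
proof -
  obtain f where f: "\<Gamma> \<alpha> = matfun 2 f Ht" using dep a unfolding dephasing_def by blast
  have herm: "hermitian_op 2 Ht" using dep unfolding dephasing_def by blast
  note P = zR2_pos[OF pos]
  let ?p = "zKp Ht" and ?q = "zKq Ht" and ?m = "zm Ht" and ?r = "zr Ht"
  define u where "u = (f (?m + ?r) + f (?m - ?r)) / 2"
  define v where "v = (f (?m + ?r) - f (?m - ?r)) / 2"
  have G: "\<Gamma> \<alpha> = M2 (u + v * of_real ?p) (v * ?q) (v * cnj ?q) (u - v * of_real ?p)"
    unfolding f u_def v_def by (subst Ht_form[OF herm pos], rule matfun_K[OF P(2) P(1)])
  have KC: "complex_of_real ?p * complex_of_real ?p + ?q * cnj ?q = 1" using K_complex[OF P(2)] .
  have U: "zu \<Gamma> \<alpha> = u" unfolding zu_def G by simp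
  have "zv Ht \<Gamma> \<alpha> = ((u + v * ?p) * ?p + v * ?q * cnj ?q + v * cnj ?q * ?q - (u - v * ?p) * ?p) / 2"
    unfolding zv_def G by simp
  also have "\<dots> = v * (complex_of_real ?p * complex_of_real ?p + ?q * cnj ?q)" by (simp add: algebra_simps)
  finally have V: "zv Ht \<Gamma> \<alpha> = v" using KC by simp
  show ?thesis unfolding U V by (rule G)
qed

lemma im_half: "(v * cnj u - u * cnj v) / 2 = \<i> * complex_of_real (Im (v * cnj u))"
  by (simp add: complex_eq_iff)

lemma sq_half: "- (v * cnj v) / 2 = - complex_of_real ((Re v)^2 + (Im v)^2) / 2"
  using complex_norm_square[of v] by (simp add: cmod_power2)

lemma pw_form:
  assumes dep: "dephasing 2 Ht I \<Gamma>" and pos: "zR2 Ht > 0" and R: "\<rho> \<in> carrier_mat 2 2"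
  shows "lindbladian 2 Ht I \<Gamma> \<rho> = (- \<i> * of_real (zw Ht I \<Gamma>)) \<cdot>\<^sub>m commutator (Km (zKp Ht) (zKq Ht)) \<rho>
    + (- of_real (zsg Ht I \<Gamma>) / 2) \<cdot>\<^sub>m (2 \<cdot>\<^sub>m \<rho> - 2 \<cdot>\<^sub>m (Km (zKp Ht) (zKq Ht) * \<rho> * Km (zKp Ht) (zKq Ht)))"
proof -
  have herm: "hermitian_op 2 Ht" using dep unfolding dephasing_def by blast
  note P = zR2_pos[OF pos]
  have L: "lindbladian 2 Ht I \<Gamma> \<rho> = (- \<i> * of_real (zr Ht) + (\<Sum>\<alpha>\<in>I. (zv Ht \<Gamma> \<alpha> * cnj (zu \<Gamma> \<alpha>) - zu \<Gamma> \<alpha> * cnj (zv Ht \<Gamma> \<alpha>))/2)) \<cdot>\<^sub>m commutator (Km (zKp Ht) (zKq Ht)) \<rho>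
    + (\<Sum>\<alpha>\<in>I. - (zv Ht \<Gamma> \<alpha> * cnj (zv Ht \<Gamma> \<alpha>))/2) \<cdot>\<^sub>m (2 \<cdot>\<^sub>m \<rho> - 2 \<cdot>\<^sub>m (Km (zKp Ht) (zKq Ht) * \<rho> * Km (zKp Ht) (zKq Ht)))"
    by (subst Ht_form[OF herm pos], rule lindblad_formula[OF P(2) pw_gamma[OF dep pos] R])
  have c1: "- \<i> * of_real (zr Ht) + (\<Sum>\<alpha>\<in>I. (zv Ht \<Gamma> \<alpha> * cnj (zu \<Gamma> \<alpha>) - zu \<Gamma> \<alpha> * cnj (zv Ht \<Gamma> \<alpha>))/2)
     = - \<i> * of_real (zw Ht I \<Gamma>)"
  proof -
    have s1: "(\<Sum>\<alpha>\<in>I. (zv Ht \<Gamma> \<alpha> * cnj (zu \<Gamma> \<alpha>) - zu \<Gamma> \<alpha> * cnj (zv Ht \<Gamma> \<alpha>))/2)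
      = \<i> * of_real (\<Sum>\<alpha>\<in>I. Im (zv Ht \<Gamma> \<alpha> * cnj (zu \<Gamma> \<alpha>)))"
      unfolding im_half of_real_sum sum_distrib_left ..
    show ?thesis unfolding s1 zw_def of_real_diff by (simp add: algebra_simps)
  qed
  have c2: "(\<Sum>\<alpha>\<in>I. - (zv Ht \<Gamma> \<alpha> * cnj (zv Ht \<Gamma> \<alpha>))/2) = - of_real (zsg Ht I \<Gamma>) / 2"
    unfolding sq_half zsg_def of_real_sum sum_divide_distrib[symmetric] sum_negf ..
  show ?thesis unfolding L c1 c2 ..
qed

lemma zero_comb: "X \<in> carrier_mat 2 2 \<Longrightarrow> Y \<in> carrier_mat 2 2 \<Longrightarrow> (0::complex) \<cdot>\<^sub>m X + (0::complex) \<cdot>\<^sub>m Y = 0\<^sub>m 2 2"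
  by (rule eq_matI) auto

lemma zero_comb2: "X \<in> carrier_mat 2 2 \<Longrightarrow> Y \<in> carrier_mat 2 2 \<Longrightarrow> (0::complex) \<cdot>\<^sub>m X + c \<cdot>\<^sub>m Y = c \<cdot>\<^sub>m Y"
  by (rule eq_matI) auto

lemma XY_carrier: "\<rho> \<in> carrier_mat 2 2 \<Longrightarrow> commutator (Km p q) \<rho> \<in> carrier_mat 2 2"
  "\<rho> \<in> carrier_mat 2 2 \<Longrightarrow> 2 \<cdot>\<^sub>m \<rho> - 2 \<cdot>\<^sub>m (Km p q * \<rho> * Km p q) \<in> carrier_mat 2 2"
  by (auto simp: commutator_def)

lemma pw_scalar:
  assumes dep: "dephasing 2 Ht I \<Gamma>" and z: "zR2 Ht = 0" and R: "\<rho> \<in> carrier_mat 2 2"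
  shows "lindbladian 2 Ht I \<Gamma> \<rho> = 0\<^sub>m 2 2"
proof -
  have herm: "hermitian_op 2 Ht" using dep unfolding dephasing_def by blast
  have Ht: "Ht = M2 (of_real (zA Ht)) 0 0 (of_real (zA Ht))"
    using herm_form[OF herm] zR2_zero[OF z] by simp
  have G: "\<Gamma> \<alpha> = M2 (\<Gamma> \<alpha> $$ (0,0) + (\<lambda>_. 0) \<alpha> * of_real 1) ((\<lambda>_. 0) \<alpha> * 0) ((\<lambda>_. 0) \<alpha> * cnj 0) (\<Gamma> \<alpha> $$ (0,0) - (\<lambda>_. 0) \<alpha> * of_real 1)"
    if a: "\<alpha> \<in> I" for \<alpha>
  proof -
    obtain f where f: "\<Gamma> \<alpha> = matfun 2 f Ht" using dep a unfolding dephasing_def by blast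
    have "\<Gamma> \<alpha> = M2 (f (zA Ht)) 0 0 (f (zA Ht))" unfolding f by (subst Ht, rule matfun_scalar)
    then show ?thesis by simp
  qed
  have Ht2: "Ht = M2 (of_real (zA Ht + 0 * 1)) (of_real 0 * 0) (of_real 0 * cnj 0) (of_real (zA Ht - 0 * 1))"
    using Ht by simp
  have "lindbladian 2 Ht I \<Gamma> \<rho> = (- \<i> * of_real 0 + (\<Sum>\<alpha>\<in>I. ((\<lambda>_. 0) \<alpha> * cnj (\<Gamma> \<alpha> $$ (0,0)) - \<Gamma> \<alpha> $$ (0,0) * cnj ((\<lambda>_. 0) \<alpha>))/2)) \<cdot>\<^sub>m commutator (Km 1 0) \<rho>
    + (\<Sum>\<alpha>\<in>I. - ((\<lambda>_. 0) \<alpha> * cnj ((\<lambda>_. 0) \<alpha>))/2) \<cdot>\<^sub>m (2 \<cdot>\<^sub>m \<rho> - 2 \<cdot>\<^sub>m (Km 1 0 * \<rho> * Km 1 0))"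
    by (subst Ht2, rule lindblad_formula[where u = "\<lambda>\<alpha>. \<Gamma> \<alpha> $$ (0,0)"]) (use G R in auto)
  also have "\<dots> = 0\<^sub>m 2 2" using zero_comb[OF XY_carrier[OF R]] by simp
  finally show ?thesis .
qed

lemma pw_nonzero:
  assumes dep: "dephasing 2 Ht I \<Gamma>" and md: "minimally_degenerate 2 (lindbladian 2 Ht I \<Gamma>)"
  shows "zR2 Ht > 0" "zw Ht I \<Gamma> \<noteq> 0"
proof -
  show pos: "zR2 Ht > 0"
  proof (rule ccontr)
    assume "\<not> zR2 Ht > 0"
    then have "zR2 Ht = 0" using zR2_nonneg[of Ht] by simp
    then show False using not_md_zero[of "lindbladian 2 Ht I \<Gamma>"] pw_scalar[OF dep] md by blast
  qed
  show "zw Ht I \<Gamma> \<noteq> 0"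
  proof
    assume w: "zw Ht I \<Gamma> = 0"
    note P = zR2_pos[OF pos]
    let ?C = "- complex_of_real (zsg Ht I \<Gamma>) / 2"
    have L: "lindbladian 2 Ht I \<Gamma> \<rho> = ?C \<cdot>\<^sub>m (2 \<cdot>\<^sub>m \<rho> - 2 \<cdot>\<^sub>m (Km (zKp Ht) (zKq Ht) * \<rho> * Km (zKp Ht) (zKq Ht)))"
      if R: "\<rho> \<in> carrier_mat 2 2" for \<rho>
      using pw_form[OF dep pos R] zero_comb2[OF XY_carrier[OF R]] w by simp
    show False
    proof (cases "zsg Ht I \<Gamma> = 0")
      case True
      have "lindbladian 2 Ht I \<Gamma> \<rho> = 0\<^sub>m 2 2" if R: "\<rho> \<in> carrier_mat 2 2" for \<rho>
        using L[OF R] True by (auto intro!: eq_matI simp: R XY_carrier)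
      then show False using not_md_zero md by blast
    next
      case False
      then have "?C \<noteq> 0" by simp
      then show False using not_md_w0[OF P(2) _ L] md by blast
    qed
  qed
qed



lemma Hw_form:
  fixes w p :: real and q :: complex
  assumes "w \<noteq> 0"
  shows "M2 (of_real (w*p)) (of_real w * q) (of_real w * cnj q) (of_real (-(w*p))) =
    M2 (of_real (0 + \<bar>w\<bar> * (sgn w * p))) (of_real \<bar>w\<bar> * (of_real (sgn w) * q)) (of_real \<bar>w\<bar> * cnj (of_real (sgn w) * q)) (of_real (0 - \<bar>w\<bar> * (sgn w * p)))"
proof -
  have "\<bar>w\<bar> * sgn w = w" by (simp add: abs_mult_sgn)
  then have e: "complex_of_real \<bar>w\<bar> * complex_of_real (sgn w) = of_real w" by (metis of_real_mult)
  have h: "\<bar>w\<bar> * (sgn w * p) = w * p" using \<open>\<bar>w\<bar> * sgn w = w\<close> by (simp add: mult.assoc[symmetric])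
  have r1: "complex_of_real (0 + \<bar>w\<bar> * (sgn w * p)) = of_real (w*p)" by (simp only: add_0_left h)
  have r4: "complex_of_real (0 - \<bar>w\<bar> * (sgn w * p)) = of_real (-(w*p))" by (simp only: diff_0 h)
  have r2: "complex_of_real \<bar>w\<bar> * (complex_of_real (sgn w) * q) = of_real w * q" using e by (simp add: mult.assoc[symmetric])
  have r3: "complex_of_real \<bar>w\<bar> * cnj (complex_of_real (sgn w) * q) = of_real w * cnj q" using e by (simp add: mult.assoc[symmetric])
  show ?thesis by (simp only: r1 r2 r3 r4)
qed

lemma sgn_K:
  fixes w p :: real and q :: complex
  assumes hK: "p^2 + (cmod q)^2 = 1" and "w \<noteq> 0"
  shows "(sgn w * p)^2 + (cmod (of_real (sgn w) * q))^2 = 1"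
proof -
  have "(sgn w)^2 = 1" using assms(2) by (simp add: sgn_if)
  moreover have "(cmod (of_real (sgn w) * q))^2 = (cmod q)^2" using assms(2) by (simp add: norm_mult abs_sgn_eq)
  ultimately show ?thesis using hK by (simp add: power_mult_distrib)
qed

lemma signed_sqrt_H:
  fixes w p :: real and q :: complex
  assumes hK: "p^2 + (cmod q)^2 = 1" and w: "w \<noteq> 0"
  defines "s \<equiv> sgn w * sqrt \<bar>w\<bar>"
  shows "signed_sqrt_op 2 (M2 (of_real (w*p)) (of_real w * q) (of_real w * cnj q) (of_real (-(w*p)))) =
         M2 (of_real (s*p)) (of_real s * q) (of_real s * cnj q) (of_real (-(s*p)))"
proof -
  let ?f = "\<lambda>x. complex_of_real (sgn x * sqrt \<bar>x\<bar>)"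
  have aw: "\<bar>w\<bar> > 0" using w by simp
  have "signed_sqrt_op 2 (M2 (of_real (w*p)) (of_real w * q) (of_real w * cnj q) (of_real (-(w*p))))
    = M2 ((?f (0 + \<bar>w\<bar>) + ?f (0 - \<bar>w\<bar>)) / 2 + (?f (0 + \<bar>w\<bar>) - ?f (0 - \<bar>w\<bar>)) / 2 * of_real (sgn w * p))
        ((?f (0 + \<bar>w\<bar>) - ?f (0 - \<bar>w\<bar>)) / 2 * (of_real (sgn w) * q)) ((?f (0 + \<bar>w\<bar>) - ?f (0 - \<bar>w\<bar>)) / 2 * cnj (of_real (sgn w) * q))
        ((?f (0 + \<bar>w\<bar>) + ?f (0 - \<bar>w\<bar>)) / 2 - (?f (0 + \<bar>w\<bar>) - ?f (0 - \<bar>w\<bar>)) / 2 * of_real (sgn w * p))"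
    unfolding signed_sqrt_op_def Hw_form[OF w] by (rule matfun_K[OF sgn_K[OF hK w] aw])
  also have "\<dots> = M2 (of_real (s*p)) (of_real s * q) (of_real s * cnj q) (of_real (-(s*p)))"
    using aw unfolding s_def by (simp add: sgn_if)
  finally show ?thesis .
qed

lemma nondeg_H:
  fixes w p :: real and q :: complex
  assumes hK: "p^2 + (cmod q)^2 = 1" and w: "w \<noteq> 0"
  shows "nondegenerate_op 2 (M2 (of_real (w*p)) (of_real w * q) (of_real w * cnj q) (of_real (-(w*p))))"
    (is "nondegenerate_op 2 ?H")
proof -
  obtain U where U: "unitary_op 2 U" "M2 p q (cnj q) (- p) = U * M2 1 0 0 (-1) * mat_adjoint U"
    using K_unitary[OF hK] by blast
  obtain a b c e where Ue: "U = M2 a b c e"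
    using M2_eta[of U] U(1) unfolding unitary_op_def by blast
  have K: "complex_of_real p = a * 1 * cnj a + b * (-1) * cnj b \<and> q = a * 1 * cnj c + b * (-1) * cnj e \<and>
      cnj q = c * 1 * cnj a + e * (-1) * cnj b \<and> complex_of_real (- p) = c * 1 * cnj c + e * (-1) * cnj e"
      using U(2) unfolding Ue conj_diag M2_eq .
  have Hd: "?H = U * M2 (of_real w) 0 0 (- of_real w) * mat_adjoint U"
  proof -
    have "?H = M2 (of_real w * of_real p) (of_real w * q) (of_real w * cnj q) (of_real w * of_real (- p))" by simp
    also have "\<dots> = U * M2 (of_real w) 0 0 (- of_real w) * mat_adjoint U"
    proof -
      from K have K1: "complex_of_real p = a * 1 * cnj a + b * (-1) * cnj b" and K2: "q = a * 1 * cnj c + b * (-1) * cnj e"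
        and K3: "cnj q = c * 1 * cnj a + e * (-1) * cnj b" and K4: "complex_of_real (- p) = c * 1 * cnj c + e * (-1) * cnj e"
        by blast+
      have f: "a * of_real w * cnj a + b * (- of_real w) * cnj b = of_real w * (a * 1 * cnj a + b * (-1) * cnj b)"
        "a * of_real w * cnj c + b * (- of_real w) * cnj e = of_real w * (a * 1 * cnj c + b * (-1) * cnj e)"
        "c * of_real w * cnj a + e * (- of_real w) * cnj b = of_real w * (c * 1 * cnj a + e * (-1) * cnj b)"
        "c * of_real w * cnj c + e * (- of_real w) * cnj e = of_real w * (c * 1 * cnj c + e * (-1) * cnj e)"
        by (simp_all add: algebra_simps)
      show ?thesis unfolding Ue conj_diag f K1[symmetric] K2[symmetric] K3[symmetric] K4[symmetric] ..
    qed
    finally show ?thesis .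
  qed
  have UU: "U * mat_adjoint U = 1\<^sub>m 2" "mat_adjoint U * U = 1\<^sub>m 2" using U(1) unfolding unitary_op_def by auto
  have sim: "similar_mat ?H (M2 (of_real w) 0 0 (- of_real w))"
    by (rule similar_matI[of _ _ _ _ 2, OF _ UU(1) UU(2) Hd]) (use U(1) in \<open>auto simp: unitary_op_def Ue\<close>)
  have cpD: "char_poly (M2 (of_real w) 0 0 (- of_real w)) = [:- of_real w, 1:] * [:of_real w, 1:]"
  proof -
    have ut: "upper_triangular (M2 (of_real w) 0 0 (- of_real w))"
      by (auto simp: upper_triangular_def less2)
    have dm: "diag_mat (M2 (of_real w) 0 0 (- of_real w)) = [of_real w, - of_real w]"
      by (simp add: diag_mat_def eval_nat_numeral upt_rec)
    show ?thesis unfolding char_poly_upper_triangular[OF M2_carrier ut] dm by simp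
  qed
  have cp: "char_poly ?H = [:- of_real w, 1:] * [:of_real w, 1:]" using char_poly_similar[OF sim] cpD by simp
  have wc: "complex_of_real w \<noteq> 0" using w by simp
  show ?thesis unfolding nondegenerate_op_def
  proof (intro conjI allI impI)
    show "?H \<in> carrier_mat 2 2" by simp
    fix mu assume ev: "eigenvalue ?H mu"
    then have "poly (char_poly ?H) mu = 0" using eigenvalue_root_char_poly[OF M2_carrier] by blast
    then have "(mu - of_real w) * (mu + of_real w) = 0" unfolding cp by (simp add: algebra_simps)
    then have "mu - of_real w = 0 \<or> mu + of_real w = 0" by simp
    then have mu: "mu = of_real w \<or> mu = - of_real w" by (auto simp: eq_neg_iff_add_eq_0)
    have nz: "[:- of_real w, 1:] * [:of_real w, 1:] \<noteq> (0 :: complex poly)" by simp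
    have o1: "Polynomial.order x [:- x, 1:] = 1" for x :: complex using order_power_n_n[of x 1] by simp
    show "Polynomial.order mu (char_poly ?H) = 1"
      unfolding cp order_mult[OF nz]
    proof (cases "mu = of_real w")
      case True
      have "Polynomial.order mu [:of_real w, 1:] = 0" by (rule order_0I) (use True wc in simp)
      then show "Polynomial.order mu [:- of_real w, 1:] + Polynomial.order mu [:of_real w, 1:] = 1"
        using o1[of mu] True by simp
    next
      case False
      then have m: "mu = - of_real w" using mu by blast
      have "Polynomial.order mu [:- of_real w, 1:] = 0" by (rule order_0I) (use m wc in simp)
      moreover have "Polynomial.order mu [:of_real w, 1:] = 1" using o1[of mu] m by simp
      ultimately show "Polynomial.order mu [:- of_real w, 1:] + Polynomial.order mu [:of_real w, 1:] = 1" by simp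
    qed
  qed
qed



lemma comm_smult_K: "\<rho> \<in> carrier_mat 2 2 \<Longrightarrow>
  commutator (M2 (of_real (w*p)) (of_real w * q) (of_real w * cnj q) (of_real (-(w*p)))) \<rho> = of_real w \<cdot>\<^sub>m commutator (Km p q) \<rho>"
proof -
  assume R: "\<rho> \<in> carrier_mat 2 2"
  obtain x y z u where Rx: "\<rho> = M2 x y z u" using M2_eta[OF R] by blast
  show ?thesis unfolding Rx Km_def by (simp add: algebra_simps)
qed

lemma comm2_smult_K: "\<rho> \<in> carrier_mat 2 2 \<Longrightarrow>
  commutator (M2 (of_real (s*p)) (of_real s * q) (of_real s * cnj q) (of_real (-(s*p))))
    (commutator (M2 (of_real (s*p)) (of_real s * q) (of_real s * cnj q) (of_real (-(s*p)))) \<rho>)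
   = of_real (s*s) \<cdot>\<^sub>m commutator (Km p q) (commutator (Km p q) \<rho>)"
proof -
  assume R: "\<rho> \<in> carrier_mat 2 2"
  obtain x y z u where Rx: "\<rho> = M2 x y z u" using M2_eta[OF R] by blast
  show ?thesis unfolding Rx Km_def by (simp add: algebra_simps)
qed

lemma pw_main:
  assumes dep: "dephasing 2 Ht I \<Gamma>" and md: "minimally_degenerate 2 (lindbladian 2 Ht I \<Gamma>)"
  shows "hermitian_op 2 (zH Ht I \<Gamma>) \<and> nondegenerate_op 2 (zH Ht I \<Gamma>) \<and> op_trace 2 (zH Ht I \<Gamma>) = 0 \<and> zg Ht I \<Gamma> \<ge> 0 \<and>
    (\<forall>\<rho>\<in>carrier_mat 2 2. lindbladian 2 Ht I \<Gamma> \<rho> =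
       (- \<i>) \<cdot>\<^sub>m commutator (zH Ht I \<Gamma>) \<rho>
       + complex_of_real (zg Ht I \<Gamma> / 2) \<cdot>\<^sub>m
          (- commutator (signed_sqrt_op 2 (zH Ht I \<Gamma>)) (commutator (signed_sqrt_op 2 (zH Ht I \<Gamma>)) \<rho>)))"
proof -
  note NZ = pw_nonzero[OF dep md]
  note P = zR2_pos[OF NZ(1)]
  define w where "w = zw Ht I \<Gamma>"
  define p where "p = zKp Ht"
  define q where "q = zKq Ht"
  define sg where "sg = zsg Ht I \<Gamma>"
  define s where "s = sgn w * sqrt \<bar>w\<bar>"
  have w0: "w \<noteq> 0" using NZ(2) unfolding w_def .
  have hK: "p^2 + (cmod q)^2 = 1" using P(2) unfolding p_def q_def .
  have H: "zH Ht I \<Gamma> = M2 (of_real (w*p)) (of_real w * q) (of_real w * cnj q) (of_real (-(w*p)))"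
    unfolding zH_def w_def p_def q_def ..
  have S: "signed_sqrt_op 2 (zH Ht I \<Gamma>) = M2 (of_real (s*p)) (of_real s * q) (of_real s * cnj q) (of_real (-(s*p)))"
    unfolding H s_def by (rule signed_sqrt_H[OF hK w0])
  have sg0: "sg \<ge> 0" unfolding sg_def zsg_def by (intro sum_nonneg) simp
  have pw: "(w^2) powr (-1/2) = 1 / \<bar>w\<bar>"
  proof -
    have "(w^2) powr (-1/2) = (w^2) powr (- (1/2))" by simp
    also have "\<dots> = 1 / sqrt (w^2)" unfolding powr_minus_divide by (simp add: powr_half_sqrt)
    finally show ?thesis by simp
  qed
  have g: "zg Ht I \<Gamma> = sg / \<bar>w\<bar>" unfolding zg_def sg_def w_def[symmetric] pw by simp
  have ss: "s * s = \<bar>w\<bar>" unfolding s_def using w0 by (simp add: sgn_if)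
  have key: "complex_of_real (zg Ht I \<Gamma> / 2) * complex_of_real (s * s) = complex_of_real sg / 2"
  proof -
    have "zg Ht I \<Gamma> / 2 * (s * s) = sg / 2" unfolding g ss using w0 by simp
    then show ?thesis by (metis of_real_divide of_real_mult of_real_numeral)
  qed
  have key2: "complex_of_real s * (complex_of_real s * (complex_of_real (zg Ht I \<Gamma>) * A)) = complex_of_real sg * A" for A
  proof -
    have "complex_of_real s * (complex_of_real s * complex_of_real (zg Ht I \<Gamma>)) = complex_of_real sg"
      using key by (simp add: algebra_simps)
    then show ?thesis by (metis mult.assoc)
  qed
  have ident: "lindbladian 2 Ht I \<Gamma> \<rho> =
       (- \<i>) \<cdot>\<^sub>m commutator (zH Ht I \<Gamma>) \<rho>
       + complex_of_real (zg Ht I \<Gamma> / 2) \<cdot>\<^sub>m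
          (- commutator (signed_sqrt_op 2 (zH Ht I \<Gamma>)) (commutator (signed_sqrt_op 2 (zH Ht I \<Gamma>)) \<rho>))"
    if R: "\<rho> \<in> carrier_mat 2 2" for \<rho>
  proof -
    have Y: "commutator (Km p q) (commutator (Km p q) \<rho>) = 2 \<cdot>\<^sub>m \<rho> - 2 \<cdot>\<^sub>m (Km p q * \<rho> * Km p q)"
      by (rule comm2[OF KK[OF hK] Km_carrier(1) R])
    have L: "lindbladian 2 Ht I \<Gamma> \<rho> = (- \<i> * of_real w) \<cdot>\<^sub>m commutator (Km p q) \<rho>
      + (- of_real sg / 2) \<cdot>\<^sub>m (2 \<cdot>\<^sub>m \<rho> - 2 \<cdot>\<^sub>m (Km p q * \<rho> * Km p q))"
      unfolding w_def sg_def p_def q_def by (rule pw_form[OF dep NZ(1) R])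
    have XYc: "commutator (Km p q) \<rho> \<in> carrier_mat 2 2" "2 \<cdot>\<^sub>m \<rho> - 2 \<cdot>\<^sub>m (Km p q * \<rho> * Km p q) \<in> carrier_mat 2 2"
      using XY_carrier[OF R] by auto
    show ?thesis unfolding L S unfolding comm2_smult_K[OF R] unfolding Y unfolding H comm_smult_K[OF R]
      by (rule eq_matI) (use XYc in \<open>auto simp: algebra_simps key2\<close>)
  qed
  show ?thesis
  proof (intro conjI ballI)
    show "hermitian_op 2 (zH Ht I \<Gamma>)" unfolding H hermitian_M2 by simp
    show "nondegenerate_op 2 (zH Ht I \<Gamma>)" unfolding H by (rule nondeg_H[OF hK w0])
    show "op_trace 2 (zH Ht I \<Gamma>) = 0" unfolding H by simp
    show "zg Ht I \<Gamma> \<ge> 0" unfolding g using sg0 by simp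
  qed (rule ident)
qed



lemma smooth_Re: "smooth_fun f \<Longrightarrow> smooth_fun (\<lambda>t. Re (f t))"
  by (rule smooth_linear[OF bounded_linear_Re])
lemma smooth_Im: "smooth_fun f \<Longrightarrow> smooth_fun (\<lambda>t. Im (f t))"
  by (rule smooth_linear[OF bounded_linear_Im])
lemma smooth_cnj: "smooth_fun f \<Longrightarrow> smooth_fun (\<lambda>t. cnj (f t))"
  by (rule smooth_linear[OF bounded_linear_cnj])
lemma smooth_of_real: "smooth_fun (f :: real \<Rightarrow> real) \<Longrightarrow> smooth_fun (\<lambda>t. complex_of_real (f t))"
  by (rule smooth_linear[OF bounded_linear_of_real])
lemma smooth_div: "smooth_fun (f :: real \<Rightarrow> 'a::real_normed_field) \<Longrightarrow> smooth_fun (\<lambda>t. f t / c)"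
  by (rule smooth_linear[OF bounded_linear_divide])
lemma smooth_sq: "smooth_fun (f :: real \<Rightarrow> 'a::real_normed_algebra_1) \<Longrightarrow> smooth_fun (\<lambda>t. (f t)^2)"
  unfolding power2_eq_square by (rule smooth_mult)

lemma smooth_family:
  assumes Hs: "smooth_op_family 2 Hts" and Gs: "\<forall>\<alpha>\<in>I. smooth_op_family 2 (\<lambda>s. \<Gamma>s s \<alpha>)"
    and fin: "finite I"
    and pos: "\<And>s. zR2 (Hts s) > 0" and wnz: "\<And>s. zw (Hts s) I (\<Gamma>s s) \<noteq> 0"
  shows "smooth_op_family 2 (\<lambda>s. zH (Hts s) I (\<Gamma>s s))" "smooth_fun (\<lambda>s. zg (Hts s) I (\<Gamma>s s))"
proof -
  have E: "smooth_fun (\<lambda>s. Hts s $$ (i,j))" if "i < 2" "j < 2" for i j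
    using Hs that unfolding smooth_op_family_def by blast
  have GE: "smooth_fun (\<lambda>s. \<Gamma>s s \<alpha> $$ (i,j))" if "\<alpha> \<in> I" "i < 2" "j < 2" for \<alpha> i j
    using Gs that unfolding smooth_op_family_def by blast
  have A: "smooth_fun (\<lambda>s. zA (Hts s))" unfolding zA_def by (intro smooth_Re E) auto
  have D: "smooth_fun (\<lambda>s. zD (Hts s))" unfolding zD_def by (intro smooth_Re E) auto
  have B: "smooth_fun (\<lambda>s. zB (Hts s))" unfolding zB_def by (intro E) auto
  have C: "smooth_fun (\<lambda>s. zc (Hts s))" unfolding zc_def by (intro smooth_div smooth_diff A D)
  have R2: "smooth_fun (\<lambda>s. zR2 (Hts s))" unfolding zR2_def
    by (intro smooth_add smooth_sq C smooth_Re smooth_Im B)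
  have r: "smooth_fun (\<lambda>s. zr (Hts s))" unfolding zr_def by (rule smooth_powr[OF R2 pos])
  have ir: "smooth_fun (\<lambda>s. zir (Hts s))" unfolding zir_def by (rule smooth_powr[OF R2 pos])
  have Kp: "smooth_fun (\<lambda>s. zKp (Hts s))" unfolding zKp_def by (intro smooth_mult C ir)
  have Kq: "smooth_fun (\<lambda>s. zKq (Hts s))" unfolding zKq_def by (intro smooth_mult B smooth_of_real ir)
  have v: "smooth_fun (\<lambda>s. zv (Hts s) (\<Gamma>s s) \<alpha>)" if a: "\<alpha> \<in> I" for \<alpha>
    unfolding zv_def
    by (intro smooth_div smooth_diff smooth_add smooth_mult GE smooth_of_real Kp Kq smooth_cnj) (use a in auto)
  have u: "smooth_fun (\<lambda>s. zu (\<Gamma>s s) \<alpha>)" if a: "\<alpha> \<in> I" for \<alpha>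
    unfolding zu_def by (intro smooth_div smooth_add GE) (use a in auto)
  have w: "smooth_fun (\<lambda>s. zw (Hts s) I (\<Gamma>s s))" unfolding zw_def
    by (intro smooth_diff r smooth_sum[OF fin] smooth_Im smooth_mult v smooth_cnj u)
  have sg: "smooth_fun (\<lambda>s. zsg (Hts s) I (\<Gamma>s s))" unfolding zsg_def
    by (intro smooth_sum[OF fin] smooth_add smooth_sq smooth_Re smooth_Im v)
  have w2pos: "(zw (Hts s) I (\<Gamma>s s))^2 > 0" for s using wnz[of s] by simp
  show "smooth_fun (\<lambda>s. zg (Hts s) I (\<Gamma>s s))" unfolding zg_def
    by (intro smooth_mult sg smooth_powr smooth_sq w w2pos)
  show "smooth_op_family 2 (\<lambda>s. zH (Hts s) I (\<Gamma>s s))"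
    unfolding smooth_op_family_def
  proof (intro conjI allI impI)
    fix s show "zH (Hts s) I (\<Gamma>s s) \<in> carrier_mat 2 2" by (simp add: zH_def)
  next
    fix i j :: nat assume ij: "i < 2" "j < 2"
    have e00: "smooth_fun (\<lambda>s. complex_of_real (zw (Hts s) I (\<Gamma>s s) * zKp (Hts s)))"
      by (intro smooth_of_real smooth_mult w Kp)
    have e01: "smooth_fun (\<lambda>s. complex_of_real (zw (Hts s) I (\<Gamma>s s)) * zKq (Hts s))"
      by (intro smooth_of_real smooth_mult w Kq)
    have e10: "smooth_fun (\<lambda>s. complex_of_real (zw (Hts s) I (\<Gamma>s s)) * cnj (zKq (Hts s)))"
      by (intro smooth_of_real smooth_mult w Kq smooth_cnj)
    have e11: "smooth_fun (\<lambda>s. complex_of_real (- (zw (Hts s) I (\<Gamma>s s) * zKp (Hts s))))"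
      by (intro smooth_of_real smooth_uminus smooth_mult w Kp)
    show "smooth_fun (\<lambda>s. zH (Hts s) I (\<Gamma>s s) $$ (i, j))"
      using ij e00 e01 e10 e11 unfolding zH_def less2 by auto
  qed
qed

theorem lemma3p1:
  shows "(\<forall>(Ht :: complex mat) (I :: 'i set) \<Gamma>.
            dephasing 2 Ht I \<Gamma> \<and>
            minimally_degenerate 2 (lindbladian 2 Ht I \<Gamma>) \<longrightarrow>
            (\<exists>H (\<gamma>::real). hermitian_op 2 H \<and> nondegenerate_op 2 H \<and> op_trace 2 H = 0 \<and> \<gamma> \<ge> 0 \<and>
               (\<forall>\<rho>\<in>carrier_mat 2 2. lindbladian 2 Ht I \<Gamma> \<rho> =
                  (- \<i>) \<cdot>\<^sub>m commutator H \<rho>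
                  + complex_of_real (\<gamma> / 2) \<cdot>\<^sub>m
                     (- commutator (signed_sqrt_op 2 H) (commutator (signed_sqrt_op 2 H) \<rho>)))))
       \<and>
       (\<forall>(Hts :: real \<Rightarrow> complex mat) (I :: 'i set) (\<Gamma>s :: real \<Rightarrow> 'i \<Rightarrow> complex mat).
            (\<forall>s. dephasing 2 (Hts s) I (\<Gamma>s s) \<and>
                 minimally_degenerate 2 (lindbladian 2 (Hts s) I (\<Gamma>s s))) \<and>
            smooth_op_family 2 Hts \<and> (\<forall>\<alpha>\<in>I. smooth_op_family 2 (\<lambda>s. \<Gamma>s s \<alpha>)) \<longrightarrow>
            (\<exists>(Hs :: real \<Rightarrow> complex mat) (\<gamma>s :: real \<Rightarrow> real).
               smooth_op_family 2 Hs \<and> smooth_fun \<gamma>s \<and>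
               (\<forall>s. hermitian_op 2 (Hs s) \<and> nondegenerate_op 2 (Hs s) \<and> op_trace 2 (Hs s) = 0 \<and>
                    \<gamma>s s \<ge> 0 \<and>
                    (\<forall>\<rho>\<in>carrier_mat 2 2. lindbladian 2 (Hts s) I (\<Gamma>s s) \<rho> =
                       (- \<i>) \<cdot>\<^sub>m commutator (Hs s) \<rho>
                       + complex_of_real (\<gamma>s s / 2) \<cdot>\<^sub>m
                          (- commutator (signed_sqrt_op 2 (Hs s))
                               (commutator (signed_sqrt_op 2 (Hs s)) \<rho>))))))"
proof (intro conjI allI impI)
  fix Ht :: "complex mat" and I :: "'i set" and \<Gamma>
  assume h: "dephasing 2 Ht I \<Gamma> \<and> minimally_degenerate 2 (lindbladian 2 Ht I \<Gamma>)"
  show "\<exists>H (\<gamma>::real). hermitian_op 2 H \<and> nondegenerate_op 2 H \<and> op_trace 2 H = 0 \<and> \<gamma> \<ge> 0 \<and>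
               (\<forall>\<rho>\<in>carrier_mat 2 2. lindbladian 2 Ht I \<Gamma> \<rho> =
                  (- \<i>) \<cdot>\<^sub>m commutator H \<rho>
                  + complex_of_real (\<gamma> / 2) \<cdot>\<^sub>m
                     (- commutator (signed_sqrt_op 2 H) (commutator (signed_sqrt_op 2 H) \<rho>)))"
    using pw_main[of Ht I \<Gamma>] h by blast
next
  fix Hts :: "real \<Rightarrow> complex mat" and I :: "'i set" and \<Gamma>s :: "real \<Rightarrow> 'i \<Rightarrow> complex mat"
  assume h: "(\<forall>s. dephasing 2 (Hts s) I (\<Gamma>s s) \<and>
                 minimally_degenerate 2 (lindbladian 2 (Hts s) I (\<Gamma>s s))) \<and>
            smooth_op_family 2 Hts \<and> (\<forall>\<alpha>\<in>I. smooth_op_family 2 (\<lambda>s. \<Gamma>s s \<alpha>))"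
  have dep: "\<And>s. dephasing 2 (Hts s) I (\<Gamma>s s)" and md: "\<And>s. minimally_degenerate 2 (lindbladian 2 (Hts s) I (\<Gamma>s s))"
    using h by auto
  have fin: "finite I" using dep[of 0] unfolding dephasing_def by blast
  note SF = smooth_family[of Hts I \<Gamma>s, OF _ _ fin pw_nonzero(1)[OF dep md] pw_nonzero(2)[OF dep md]]
  show "\<exists>(Hs :: real \<Rightarrow> complex mat) (\<gamma>s :: real \<Rightarrow> real).
               smooth_op_family 2 Hs \<and> smooth_fun \<gamma>s \<and>
               (\<forall>s. hermitian_op 2 (Hs s) \<and> nondegenerate_op 2 (Hs s) \<and> op_trace 2 (Hs s) = 0 \<and>
                    \<gamma>s s \<ge> 0 \<and>
                    (\<forall>\<rho>\<in>carrier_mat 2 2. lindbladian 2 (Hts s) I (\<Gamma>s s) \<rho> =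
                       (- \<i>) \<cdot>\<^sub>m commutator (Hs s) \<rho>
                       + complex_of_real (\<gamma>s s / 2) \<cdot>\<^sub>m
                          (- commutator (signed_sqrt_op 2 (Hs s))
                               (commutator (signed_sqrt_op 2 (Hs s)) \<rho>))))"
    apply (rule exI[of _ "\<lambda>s. zH (Hts s) I (\<Gamma>s s)"], rule exI[of _ "\<lambda>s. zg (Hts s) I (\<Gamma>s s)"])
    using SF h pw_main[OF dep md] by blast
qed


end
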